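(* Let $P$ be an $n\times n$ sign pattern and $A\in\mathcal{Q}(P)$. If $A$ is nilpotent and has the nSSP, then every superpattern of $P$ (including $P$ itself) is a spectrally arbitrary pattern.
   Context: A sign pattern is an array with entries in $\{+,-,0\}$; its qualitative class $\mathcal{Q}(P)$ is the set of real matrices of the same size whose entries have the signs prescribed by $P$. $P'$ is a superpattern of $P$ if $P'$ is obtained from $P$ by replacing some (possibly none) of its $0$ entries by $+$ or $-$. An $n\times n$ sign pattern $P$ is spectrally arbitrary if for every monic real polynomial $p$ of degree $n$ there is $A\in\mathcal{Q}(P)$ with characteristic polynomial $p$. $\circ$ is the entrywise product. A real $n\times n$ matrix $A$ has the nSSP if $X=O$ is the only real $n\times n$ matrix with $A\circ X=O$ and $AX^\top-X^\top A=O$. *)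

theory Defs
  imports "Jordan_Normal_Form.Char_Poly"
begin

datatype sign = SPos | SNeg | SZero

definition sign_of :: "real \<Rightarrow> sign" where
  "sign_of x = (if x > 0 then SPos else if x < 0 then SNeg else SZero)"

definition in_qual_class :: "real mat \<Rightarrow> sign mat \<Rightarrow> bool" where
  "in_qual_class A P \<longleftrightarrow> dim_row A = dim_row P \<and> dim_col A = dim_col P \<and>
     (\<forall>i < dim_row P. \<forall>j < dim_col P. sign_of (A $$ (i, j)) = P $$ (i, j))"

definition superpattern :: "sign mat \<Rightarrow> sign mat \<Rightarrow> bool" where
  "superpattern P' P \<longleftrightarrow> dim_row P' = dim_row P \<and> dim_col P' = dim_col P \<and>
     (\<forall>i < dim_row P. \<forall>j < dim_col P. P $$ (i, j) \<noteq> SZero \<longrightarrow> P' $$ (i, j) = P $$ (i, j))"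

definition spectrally_arbitrary :: "sign mat \<Rightarrow> bool" where
  "spectrally_arbitrary P \<longleftrightarrow> dim_row P = dim_col P \<and>
     (\<forall>p :: real poly. monic p \<and> degree p = dim_row P \<longrightarrow>
        (\<exists>A. in_qual_class A P \<and> char_poly A = p))"

definition hadamard :: "real mat \<Rightarrow> real mat \<Rightarrow> real mat" where
  "hadamard A X = mat (dim_row A) (dim_col A) (\<lambda>(i, j). A $$ (i, j) * X $$ (i, j))"

definition nSSP :: "real mat \<Rightarrow> bool" where
  "nSSP A \<longleftrightarrow> (\<forall>X \<in> carrier_mat (dim_row A) (dim_row A).
     hadamard A X = 0\<^sub>m (dim_row A) (dim_row A) \<and>
     A * transpose_mat X - transpose_mat X * A = 0\<^sub>m (dim_row A) (dim_row A)
     \<longrightarrow> X = 0\<^sub>m (dim_row A) (dim_row A))"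

definition nilpotent_mat :: "real mat \<Rightarrow> bool" where
  "nilpotent_mat A \<longleftrightarrow> (\<exists>k. A ^\<^sub>m k = 0\<^sub>m (dim_row A) (dim_col A))"

end

theory Submission
  imports Defs "Jordan_Normal_Form.Jordan_Normal_Form_Existence"
begin

definition nrm :: "real mat \<Rightarrow> real" where
  "nrm X = (\<Sum>i<dim_row X. \<Sum>j<dim_col X. \<bar>X $$ (i,j)\<bar>)"

lemma nrm_nonneg: "0 \<le> nrm X"
  unfolding nrm_def by (intro sum_nonneg) auto

lemma entry_le_nrm: assumes "i < dim_row X" "j < dim_col X"
  shows "\<bar>X $$ (i,j)\<bar> \<le> nrm X"
proof -
  have "\<bar>X $$ (i,j)\<bar> \<le> (\<Sum>j<dim_col X. \<bar>X $$ (i,j)\<bar>)"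
    using assms by (intro member_le_sum) auto
  also have "\<dots> \<le> nrm X" unfolding nrm_def
    using assms by (intro member_le_sum[where f = "\<lambda>i. \<Sum>j<dim_col X. \<bar>X $$ (i,j)\<bar>"]) (auto intro: sum_nonneg)
  finally show ?thesis .
qed

lemma nrm_add: assumes "X \<in> carrier_mat n m" "Y \<in> carrier_mat n m"
  shows "nrm (X + Y) \<le> nrm X + nrm Y"
proof -
  have "nrm (X + Y) = (\<Sum>i<n. \<Sum>j<m. \<bar>X $$ (i,j) + Y $$ (i,j)\<bar>)"
    using assms unfolding nrm_def by (auto intro!: sum.cong)
  also have "\<dots> \<le> (\<Sum>i<n. \<Sum>j<m. \<bar>X $$ (i,j)\<bar> + \<bar>Y $$ (i,j)\<bar>)"
    by (intro sum_mono abs_triangle_ineq)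
  also have "\<dots> = nrm X + nrm Y" using assms unfolding nrm_def
    by (simp add: sum.distrib)
  finally show ?thesis .
qed

lemma nrm_uminus: "nrm (- X) = nrm X"
  unfolding nrm_def by (auto intro!: sum.cong)

lemma nrm_minus: assumes "X \<in> carrier_mat n m" "Y \<in> carrier_mat n m"
  shows "nrm (X - Y) \<le> nrm X + nrm Y"
proof -
  have "X - Y = X + (- Y)" using assms by auto
  then show ?thesis using nrm_add[of X n m "-Y"] assms nrm_uminus[of Y] by auto
qed

lemma nrm_minus_sym: assumes "X \<in> carrier_mat n m" "Y \<in> carrier_mat n m"
  shows "nrm (X - Y) = nrm (Y - X)"
  using assms unfolding nrm_def by (auto intro!: sum.cong simp: abs_minus_commute)

lemma nrm_smult: "nrm (c \<cdot>\<^sub>m X) = \<bar>c\<bar> * nrm X"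
  unfolding nrm_def by (auto simp: sum_distrib_left abs_mult intro!: sum.cong)

lemma nrm_mult: assumes "X \<in> carrier_mat n m" "Y \<in> carrier_mat m k"
  shows "nrm (X * Y) \<le> nrm X * nrm Y"
proof -
  have "nrm (X * Y) = (\<Sum>i<n. \<Sum>j<k. \<bar>\<Sum>l<m. X $$ (i,l) * Y $$ (l,j)\<bar>)"
    using assms unfolding nrm_def
    by (auto intro!: sum.cong simp: scalar_prod_def atLeast0LessThan)
  also have "\<dots> \<le> (\<Sum>i<n. \<Sum>j<k. \<Sum>l<m. \<bar>X $$ (i,l)\<bar> * \<bar>Y $$ (l,j)\<bar>)"
    by (intro sum_mono) (auto simp: abs_mult[symmetric] intro: sum_abs)
  also have "\<dots> = (\<Sum>i<n. \<Sum>l<m. \<bar>X $$ (i,l)\<bar> * (\<Sum>j<k. \<bar>Y $$ (l,j)\<bar>))"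
    by (simp add: sum_distrib_left sum.swap[of _ "{..<k}"])
  also have "\<dots> \<le> (\<Sum>i<n. \<Sum>l<m. \<bar>X $$ (i,l)\<bar> * nrm Y)"
  proof (intro sum_mono mult_left_mono)
    fix l assume "l \<in> {..<m}"
    have d: "dim_row Y = m" "dim_col Y = k" using assms by auto
    from \<open>l \<in> {..<m}\<close> show "(\<Sum>j<k. \<bar>Y $$ (l,j)\<bar>) \<le> nrm Y" unfolding nrm_def d
      by (intro member_le_sum[where f = "\<lambda>l. \<Sum>j<k. \<bar>Y $$ (l,j)\<bar>"]) (auto intro: sum_nonneg)
  qed auto
  also have "\<dots> = nrm X * nrm Y" using assms unfolding nrm_def
    by (simp add: sum_distrib_right)
  finally show ?thesis .
qed

lemma nrm_zero_iff: assumes "X \<in> carrier_mat n m"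
  shows "nrm X = 0 \<longleftrightarrow> X = 0\<^sub>m n m"
proof
  assume "nrm X = 0"
  then have "\<And>i j. i < n \<Longrightarrow> j < m \<Longrightarrow> X $$ (i,j) = 0"
    using entry_le_nrm[of _ X] assms by fastforce
  then show "X = 0\<^sub>m n m" using assms by (auto intro!: eq_matI)
qed (auto simp: nrm_def)

lemma nrm_zero[simp]: "nrm (0\<^sub>m n m) = 0"
  by (auto simp: nrm_def)

lemma mat_diff_split: fixes A :: "real mat" assumes "A \<in> carrier_mat n m" "B \<in> carrier_mat n m" "C \<in> carrier_mat n m"
  shows "A - C = (A - B) + (B - C)"
  using assms by (intro eq_matI) auto

lemma nrm_triangle: fixes A :: "real mat" assumes "A \<in> carrier_mat n m" "B \<in> carrier_mat n m" "C \<in> carrier_mat n m"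
  shows "nrm (A - C) \<le> nrm (A - B) + nrm (B - C)"
proof -
  have "A - B \<in> carrier_mat n m" "B - C \<in> carrier_mat n m" using assms by auto
  then show ?thesis using mat_diff_split[OF assms] nrm_add[of "A - B" n m "B - C"] by simp
qed

lemma fixpoint:
  fixes \<Psi> :: "real mat \<Rightarrow> real mat"
  assumes q: "0 \<le> q" "q < 1" and \<rho>: "0 \<le> \<rho>"
  and maps: "\<And>X. X \<in> carrier_mat n n \<Longrightarrow> nrm X \<le> \<rho> \<Longrightarrow> \<Psi> X \<in> carrier_mat n n \<and> nrm (\<Psi> X) \<le> \<rho>"
  and lip: "\<And>X Y. X \<in> carrier_mat n n \<Longrightarrow> nrm X \<le> \<rho> \<Longrightarrow> Y \<in> carrier_mat n n \<Longrightarrow> nrm Y \<le> \<rho>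
      \<Longrightarrow> nrm (\<Psi> X - \<Psi> Y) \<le> q * nrm (X - Y)"
  shows "\<exists>X \<in> carrier_mat n n. nrm X \<le> \<rho> \<and> \<Psi> X = X"
proof -
  define x where "x k = (\<Psi> ^^ k) (0\<^sub>m n n)" for k
  have xS: "x (Suc k) = \<Psi> (x k)" for k unfolding x_def by simp
  have inb: "x k \<in> carrier_mat n n \<and> nrm (x k) \<le> \<rho>" for k
  proof (induction k)
    case 0 then show ?case using \<rho> by (simp add: x_def)
  next
    case (Suc k) then show ?case using maps xS by metis
  qed
  have xc: "x k \<in> carrier_mat n n" for k using inb by blast
  have xb: "nrm (x k) \<le> \<rho>" for k using inb by blast
  have step: "nrm (x (Suc k) - x k) \<le> q ^ k * (2 * \<rho>)" for k
  proof (induction k)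
    case 0
    have "nrm (x (Suc 0) - x 0) \<le> nrm (x (Suc 0)) + nrm (x 0)" using nrm_minus xc by blast
    then show ?case using xb[of 0] xb[of 1] by simp
  next
    case (Suc k)
    have "nrm (x (Suc (Suc k)) - x (Suc k)) \<le> q * nrm (x (Suc k) - x k)"
      unfolding xS[of "Suc k"] xS[of k] by (rule lip) (auto simp: xc xb xS[symmetric])
    also have "\<dots> \<le> q * (q ^ k * (2 * \<rho>))" using Suc q by (intro mult_left_mono) auto
    finally show ?case by simp
  qed
  define C where "C = 2 * \<rho> / (1 - q)"
  have C0: "0 \<le> C" using q \<rho> by (simp add: C_def)
  have tail0: "nrm (x (k + d) - x k) \<le> 2 * \<rho> * q ^ k * (1 - q ^ d) / (1 - q)" for k d
  proof (induction d)
    case 0 then show ?case using xc[of k] by (simp add: nrm_zero_iff)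
  next
    case (Suc d)
    have "nrm (x (k + Suc d) - x k) \<le> nrm (x (Suc (k + d)) - x (k + d)) + nrm (x (k + d) - x k)"
      using nrm_triangle[OF xc xc xc] by simp
    also have "\<dots> \<le> q ^ (k + d) * (2 * \<rho>) + 2 * \<rho> * q ^ k * (1 - q ^ d) / (1 - q)"
      using step Suc by (intro add_mono) auto
    also have "\<dots> = 2 * \<rho> * q ^ k * (1 - q ^ Suc d) / (1 - q)"
      using q by (simp add: field_simps power_add)
    finally show ?case .
  qed
  have tail: "k \<le> m \<Longrightarrow> nrm (x m - x k) \<le> q ^ k * C" for k m
  proof -
    assume "k \<le> m"
    then obtain d where m: "m = k + d" using le_Suc_ex by blast
    have "nrm (x m - x k) \<le> 2 * \<rho> * q ^ k * (1 - q ^ d) / (1 - q)" using tail0 m by simp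
    also have "\<dots> \<le> 2 * \<rho> * q ^ k * 1 / (1 - q)"
      using q \<rho> by (intro divide_right_mono mult_left_mono) auto
    finally show ?thesis by (simp add: C_def mult.commute)
  qed
  have qk0: "(\<lambda>k. q ^ k * C) \<longlonglongrightarrow> 0"
    using q by (auto intro!: tendsto_mult_left_zero LIMSEQ_power_zero)
  have conv: "convergent (\<lambda>k. x k $$ (i,j))" if ij: "i < n" "j < n" for i j
  proof -
    have "Cauchy (\<lambda>k. x k $$ (i,j))"
    proof (rule metric_CauchyI)
      fix e :: real assume "0 < e"
      with qk0 obtain M where M: "\<And>k. k \<ge> M \<Longrightarrow> \<bar>q ^ k * C\<bar> < e"
        unfolding LIMSEQ_def dist_real_def by auto
      have "dist (x a $$ (i,j)) (x b $$ (i,j)) < e" if "a \<ge> M" "b \<ge> M" for a b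
      proof -
        have g: "dist (x a $$ (i,j)) (x b $$ (i,j)) \<le> q ^ min a b * C"
        proof (cases "a \<le> b")
          case True
          have "dist (x a $$ (i,j)) (x b $$ (i,j)) = \<bar>(x b - x a) $$ (i,j)\<bar>"
            using xc[of a] xc[of b] ij by (simp add: dist_real_def abs_minus_commute)
          also have "\<dots> \<le> nrm (x b - x a)" using xc[of a] xc[of b] ij by (intro entry_le_nrm) auto
          also have "\<dots> \<le> q ^ a * C" using tail True by blast
          finally show ?thesis using True by (simp add: min_def)
        next
          case False
          have "dist (x a $$ (i,j)) (x b $$ (i,j)) = \<bar>(x a - x b) $$ (i,j)\<bar>"
            using xc[of a] xc[of b] ij by (simp add: dist_real_def)
          also have "\<dots> \<le> nrm (x a - x b)" using xc[of a] xc[of b] ij by (intro entry_le_nrm) auto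
          also have "\<dots> \<le> q ^ b * C" using tail False by simp
          finally show ?thesis using False by (simp add: min_def)
        qed
        have "q ^ min a b * C < e" using M[of "min a b"] that q C0 by auto
        with g show ?thesis by linarith
      qed
      then show "\<exists>M. \<forall>m\<ge>M. \<forall>na\<ge>M. dist (x m $$ (i, j)) (x na $$ (i, j)) < e" by blast
    qed
    then show ?thesis using Cauchy_convergent_iff by blast
  qed
  define X where "X = mat n n (\<lambda>(i,j). lim (\<lambda>k. x k $$ (i,j)))"
  have Xc: "X \<in> carrier_mat n n" by (simp add: X_def)
  have lim_ent: "(\<lambda>k. x k $$ (i,j)) \<longlonglongrightarrow> X $$ (i,j)" if "i < n" "j < n" for i j
    using conv[OF that] that by (simp add: X_def convergent_LIMSEQ_iff)
  have nrm_lim: "(\<lambda>m. nrm (x m - Y)) \<longlonglongrightarrow> nrm (X - Y)" if Y: "Y \<in> carrier_mat n n" for Y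
  proof -
    have "(\<lambda>m. \<Sum>i<n. \<Sum>j<n. \<bar>x m $$ (i,j) - Y $$ (i,j)\<bar>) \<longlonglongrightarrow> (\<Sum>i<n. \<Sum>j<n. \<bar>X $$ (i,j) - Y $$ (i,j)\<bar>)"
      by (intro tendsto_sum tendsto_rabs tendsto_diff lim_ent tendsto_const) auto
    moreover have "nrm (x m - Y) = (\<Sum>i<n. \<Sum>j<n. \<bar>x m $$ (i,j) - Y $$ (i,j)\<bar>)" for m
      using xc[of m] Y unfolding nrm_def by (auto intro!: sum.cong)
    moreover have "nrm (X - Y) = (\<Sum>i<n. \<Sum>j<n. \<bar>X $$ (i,j) - Y $$ (i,j)\<bar>)"
      using Xc Y unfolding nrm_def by (auto intro!: sum.cong)
    ultimately show ?thesis by simp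
  qed
  have Xk: "nrm (X - x k) \<le> q ^ k * C" for k
    by (rule LIMSEQ_le_const2[OF nrm_lim[OF xc[of k]]]) (use tail in auto)
  have "(\<lambda>m. nrm (x m - 0\<^sub>m n n)) \<longlonglongrightarrow> nrm (X - 0\<^sub>m n n)" by (rule nrm_lim) auto
  moreover have "x m - 0\<^sub>m n n = x m" for m using xc[of m] by auto
  moreover have "X - 0\<^sub>m n n = X" using Xc by auto
  ultimately have "(\<lambda>m. nrm (x m)) \<longlonglongrightarrow> nrm X" by simp
  then have Xb: "nrm X \<le> \<rho>" by (rule LIMSEQ_le_const2) (use xb in auto)
  have PXc: "\<Psi> X \<in> carrier_mat n n" using maps Xc Xb by blast
  have bnd: "nrm (\<Psi> X - X) \<le> 2 * (q ^ Suc k * C)" for k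
  proof -
    have "nrm (\<Psi> X - X) \<le> nrm (\<Psi> X - x (Suc k)) + nrm (x (Suc k) - X)"
      using nrm_triangle[OF PXc xc Xc] .
    also have "nrm (\<Psi> X - x (Suc k)) \<le> q * nrm (X - x k)"
      unfolding xS by (rule lip) (auto simp: Xc Xb xc xb)
    also have "nrm (x (Suc k) - X) = nrm (X - x (Suc k))" using nrm_minus_sym Xc xc by metis
    also have "q * nrm (X - x k) \<le> q * (q ^ k * C)" using Xk q by (intro mult_left_mono) auto
    finally show ?thesis using Xk[of "Suc k"] by simp
  qed
  have "(\<lambda>k. 2 * (q ^ Suc k * C)) \<longlonglongrightarrow> 0"
    using q by (auto intro!: tendsto_mult_right_zero tendsto_mult_left_zero LIMSEQ_power_zero)
  then have "nrm (\<Psi> X - X) \<le> 0"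
    by (rule LIMSEQ_le_const) (use bnd in auto)
  then have "nrm (\<Psi> X - X) = 0" using nrm_nonneg by (meson order_antisym)
  moreover have "\<Psi> X - X \<in> carrier_mat n n" using PXc Xc by auto
  ultimately have "\<Psi> X - X = 0\<^sub>m n n" using nrm_zero_iff[of "\<Psi> X - X" n n] by auto
  then have eq0: "\<Psi> X - X = 0\<^sub>m n n" .
  have "\<Psi> X = X"
  proof (rule eq_matI)
    fix i j assume ij: "i < dim_row X" "j < dim_col X"
    then have "(\<Psi> X - X) $$ (i,j) = 0" using eq0 Xc by simp
    then show "\<Psi> X $$ (i,j) = X $$ (i,j)" using ij Xc PXc by simp
  qed (use PXc Xc in auto)
  then show ?thesis using Xc Xb by blast
qed

definition msk :: "real mat \<Rightarrow> real mat \<Rightarrow> real mat" where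
  "msk A X = mat (dim_row A) (dim_col A) (\<lambda>(i,j). if A $$ (i,j) = 0 then 0 else X $$ (i,j))"

definition Fm :: "real mat \<Rightarrow> real mat \<Rightarrow> real mat" where
  "Fm A X = X * transpose_mat A - transpose_mat A * X"

definition Tm :: "real mat \<Rightarrow> real mat \<Rightarrow> real mat" where
  "Tm A X = msk A X + Fm A X * A - A * Fm A X"

definition frob :: "real mat \<Rightarrow> real mat \<Rightarrow> real" where
  "frob U V = (\<Sum>i<dim_row U. \<Sum>j<dim_col U. U $$ (i,j) * V $$ (i,j))"

lemma msk_carrier[simp]: "A \<in> carrier_mat n n \<Longrightarrow> msk A X \<in> carrier_mat n n"
  by (auto simp: msk_def)
lemma Fm_carrier[simp]: "A \<in> carrier_mat n n \<Longrightarrow> X \<in> carrier_mat n n \<Longrightarrow> Fm A X \<in> carrier_mat n n"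
  by (auto simp: Fm_def)
lemma Tm_carrier[simp]: "A \<in> carrier_mat n n \<Longrightarrow> X \<in> carrier_mat n n \<Longrightarrow> Tm A X \<in> carrier_mat n n"
  unfolding Tm_def by (intro minus_carrier_mat mult_carrier_mat Fm_carrier) auto

lemma frob_mult_right: assumes "U \<in> carrier_mat n n" "V \<in> carrier_mat n n" "W \<in> carrier_mat n n"
  shows "frob (U * V) W = frob U (W * transpose_mat V)"
proof -
  have "frob (U * V) W = (\<Sum>i<n. \<Sum>j<n. (\<Sum>k<n. U $$ (i,k) * V $$ (k,j)) * W $$ (i,j))"
    using assms unfolding frob_def by (auto intro!: sum.cong simp: scalar_prod_def atLeast0LessThan)
  also have "\<dots> = (\<Sum>i<n. \<Sum>k<n. U $$ (i,k) * (\<Sum>j<n. W $$ (i,j) * V $$ (k,j)))"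
  proof (rule sum.cong[OF refl])
    fix i assume "i \<in> {..<n}"
    have "(\<Sum>j<n. (\<Sum>k<n. U $$ (i,k) * V $$ (k,j)) * W $$ (i,j)) = (\<Sum>j<n. \<Sum>k<n. U $$ (i,k) * (W $$ (i,j) * V $$ (k,j)))"
      by (simp add: sum_distrib_left sum_distrib_right mult_ac)
    also have "\<dots> = (\<Sum>k<n. \<Sum>j<n. U $$ (i,k) * (W $$ (i,j) * V $$ (k,j)))" by (rule sum.swap)
    also have "\<dots> = (\<Sum>k<n. U $$ (i,k) * (\<Sum>j<n. W $$ (i,j) * V $$ (k,j)))" by (simp add: sum_distrib_left)
    finally show "(\<Sum>j<n. (\<Sum>k<n. U $$ (i,k) * V $$ (k,j)) * W $$ (i,j)) = (\<Sum>k<n. U $$ (i,k) * (\<Sum>j<n. W $$ (i,j) * V $$ (k,j)))" .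
  qed
  also have "\<dots> = frob U (W * transpose_mat V)"
    using assms unfolding frob_def by (auto intro!: sum.cong simp: scalar_prod_def atLeast0LessThan)
  finally show ?thesis .
qed

lemma frob_mult_left: assumes "U \<in> carrier_mat n n" "V \<in> carrier_mat n n" "W \<in> carrier_mat n n"
  shows "frob (U * V) W = frob V (transpose_mat U * W)"
proof -
  have "frob (U * V) W = (\<Sum>i<n. \<Sum>j<n. (\<Sum>k<n. U $$ (i,k) * V $$ (k,j)) * W $$ (i,j))"
    using assms unfolding frob_def by (auto intro!: sum.cong simp: scalar_prod_def atLeast0LessThan)
  also have "\<dots> = (\<Sum>i<n. \<Sum>j<n. \<Sum>k<n. V $$ (k,j) * (U $$ (i,k) * W $$ (i,j)))"
    by (simp add: sum_distrib_left sum_distrib_right mult_ac)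
  also have "\<dots> = (\<Sum>i<n. \<Sum>k<n. \<Sum>j<n. V $$ (k,j) * (U $$ (i,k) * W $$ (i,j)))"
    by (intro sum.cong refl sum.swap)
  also have "\<dots> = (\<Sum>k<n. \<Sum>i<n. \<Sum>j<n. V $$ (k,j) * (U $$ (i,k) * W $$ (i,j)))"
    by (rule sum.swap)
  also have "\<dots> = (\<Sum>k<n. \<Sum>j<n. \<Sum>i<n. V $$ (k,j) * (U $$ (i,k) * W $$ (i,j)))"
    by (intro sum.cong refl sum.swap)
  also have "\<dots> = (\<Sum>k<n. \<Sum>j<n. V $$ (k,j) * (\<Sum>i<n. U $$ (i,k) * W $$ (i,j)))"
    by (simp add: sum_distrib_left)
  also have "\<dots> = frob V (transpose_mat U * W)"
    using assms unfolding frob_def by (auto intro!: sum.cong simp: scalar_prod_def atLeast0LessThan)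
  finally show ?thesis .
qed

lemma frob_add: assumes "U \<in> carrier_mat n n" "V \<in> carrier_mat n n" "W \<in> carrier_mat n n"
  shows "frob (U + V) W = frob U W + frob V W"
proof -
  have "frob (U + V) W = (\<Sum>i<n. \<Sum>j<n. U $$ (i,j) * W $$ (i,j) + V $$ (i,j) * W $$ (i,j))"
    using assms unfolding frob_def by (auto intro!: sum.cong simp: distrib_right)
  then show ?thesis using assms unfolding frob_def by (simp add: sum.distrib)
qed

lemma frob_minus: assumes "U \<in> carrier_mat n n" "V \<in> carrier_mat n n" "W \<in> carrier_mat n n"
  shows "frob (U - V) W = frob U W - frob V W"
proof -
  have "frob (U - V) W = (\<Sum>i<n. \<Sum>j<n. U $$ (i,j) * W $$ (i,j) - V $$ (i,j) * W $$ (i,j))"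
    using assms unfolding frob_def by (auto intro!: sum.cong simp: left_diff_distrib)
  then show ?thesis using assms unfolding frob_def by (simp add: sum_subtractf)
qed

lemma frob_minus2: assumes "U \<in> carrier_mat n n" "V \<in> carrier_mat n n" "W \<in> carrier_mat n n"
  shows "frob W (U - V) = frob W U - frob W V"
proof -
  have "frob W (U - V) = (\<Sum>i<n. \<Sum>j<n. W $$ (i,j) * U $$ (i,j) - W $$ (i,j) * V $$ (i,j))"
    using assms unfolding frob_def by (auto intro!: sum.cong simp: right_diff_distrib)
  then show ?thesis using assms unfolding frob_def by (simp add: sum_subtractf)
qed

lemma frob_self_zero: assumes "U \<in> carrier_mat n m" "frob U U = 0"
  shows "U = 0\<^sub>m n m"
proof -
  have "(\<Sum>i<n. \<Sum>j<m. U $$ (i,j) * U $$ (i,j)) = 0" using assms by (simp add: frob_def)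
  then have "\<forall>i\<in>{..<n}. (\<Sum>j<m. U $$ (i,j) * U $$ (i,j)) = 0"
    by (subst (asm) sum_nonneg_eq_0_iff) (auto intro: sum_nonneg)
  then have "\<forall>i\<in>{..<n}. \<forall>j\<in>{..<m}. U $$ (i,j) * U $$ (i,j) = 0"
    by (subst (asm) sum_nonneg_eq_0_iff) auto
  then show ?thesis using assms by (auto intro!: eq_matI)
qed

lemma frob_Tm: assumes A: "A \<in> carrier_mat n n" and X: "X \<in> carrier_mat n n"
  shows "frob (Tm A X) X = frob (msk A X) (msk A X) + frob (Fm A X) (Fm A X)"
proof -
  let ?F = "Fm A X" and ?M = "msk A X"
  have F: "?F \<in> carrier_mat n n" using A X by simp
  have M: "?M \<in> carrier_mat n n" using A by simp
  have mm: "frob ?M X = frob ?M ?M" using A X unfolding frob_def msk_def by (auto intro!: sum.cong)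
  have FA: "?F * A \<in> carrier_mat n n" and AF: "A * ?F \<in> carrier_mat n n" using F A by auto
  have "frob (Tm A X) X = frob (?M + ?F * A) X - frob (A * ?F) X"
    unfolding Tm_def using M FA AF X by (intro frob_minus) auto
  also have "\<dots> = frob ?M X + frob (?F * A) X - frob (A * ?F) X"
    using M FA X by (simp add: frob_add)
  also have "\<dots> = frob ?M ?M + (frob ?F (X * transpose_mat A) - frob ?F (transpose_mat A * X))"
    by (simp add: frob_mult_right[OF F A X] frob_mult_left[OF A F X] mm)
  also have "frob ?F (X * transpose_mat A) - frob ?F (transpose_mat A * X) = frob ?F (X * transpose_mat A - transpose_mat A * X)"
    using A X F by (intro frob_minus2[symmetric]) auto
  also have "X * transpose_mat A - transpose_mat A * X = ?F" unfolding Fm_def ..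
  finally show ?thesis .
qed

lemma Tm_inj: assumes A: "A \<in> carrier_mat n n" and X: "X \<in> carrier_mat n n"
  and ns: "nSSP A" and T0: "Tm A X = 0\<^sub>m n n"
  shows "X = 0\<^sub>m n n"
proof -
  have "frob (Tm A X) X = 0" using T0 by (simp add: frob_def)
  then have "frob (msk A X) (msk A X) + frob (Fm A X) (Fm A X) = 0" using frob_Tm[OF A X] by simp
  moreover have "frob U U \<ge> 0" for U unfolding frob_def by (intro sum_nonneg) auto
  ultimately have "frob (msk A X) (msk A X) = 0" "frob (Fm A X) (Fm A X) = 0"
    by (smt (verit))+
  then have m0: "msk A X = 0\<^sub>m n n" and f0: "Fm A X = 0\<^sub>m n n"
    using frob_self_zero A X by (meson Fm_carrier msk_carrier)+
  have h: "hadamard A X = 0\<^sub>m (dim_row A) (dim_row A)"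
  proof (rule eq_matI)
    fix i j assume ij: "i < dim_row (0\<^sub>m (dim_row A) (dim_row A))" "j < dim_col (0\<^sub>m (dim_row A) (dim_row A))"
    then have "msk A X $$ (i,j) = 0" using m0 A by simp
    then show "hadamard A X $$ (i,j) = 0\<^sub>m (dim_row A) (dim_row A) $$ (i,j)"
      using ij A by (auto simp: hadamard_def msk_def split: if_splits)
  qed (use A in \<open>auto simp: hadamard_def\<close>)
  have c: "A * transpose_mat X - transpose_mat X * A = 0\<^sub>m (dim_row A) (dim_row A)"
  proof -
    have "transpose_mat (Fm A X) = A * transpose_mat X - transpose_mat X * A"
      unfolding Fm_def using A X
      by (subst transpose_minus[of _ n n]) (auto simp: transpose_mult[of _ n n])
    then show ?thesis using f0 A by simp
  qed
  show ?thesis using ns h c X A unfolding nSSP_def by auto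
qed

definition vecm :: "nat \<Rightarrow> real mat \<Rightarrow> real vec" where
  "vecm n X = vec (n*n) (\<lambda>p. X $$ (p div n, p mod n))"
definition unv :: "nat \<Rightarrow> real vec \<Rightarrow> real mat" where
  "unv n v = mat n n (\<lambda>(i,j). v $ (i*n+j))"
definition unitm :: "nat \<Rightarrow> nat \<Rightarrow> real mat" where
  "unitm n q = mat n n (\<lambda>(i,j). if i*n+j = q then 1 else 0)"

lemma idx1: assumes "i < n" "j < (n::nat)"
  shows "(i*n+j) div n = i" "(i*n+j) mod n = j" "i*n+j < n*n"
proof -
  show "(i*n+j) div n = i" "(i*n+j) mod n = j" using assms by auto
  have "i*n+j < i*n + n" using assms by simp
  also have "\<dots> = Suc i * n" by simp
  also have "\<dots> \<le> n*n" using assms by (intro mult_le_mono1) simp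
  finally show "i*n+j < n*n" .
qed

lemma idx2: assumes "p < n*(n::nat)"
  shows "p div n < n" "p mod n < n" "(p div n)*n + p mod n = p"
proof -
  have n: "n > 0" using assms by (cases n) auto
  show "p div n < n" using assms by (simp add: less_mult_imp_div_less)
  show "p mod n < n" using n by simp
  show "(p div n)*n + p mod n = p" by simp
qed

lemma idx1': "i < n \<Longrightarrow> j < (n::nat) \<Longrightarrow> j + i*n < n*n" using idx1(3)[of i n j] by (simp add: add.commute)
lemma idx1'': "i < n \<Longrightarrow> j < (n::nat) \<Longrightarrow> (j + i*n) div n = i" "i < n \<Longrightarrow> j < (n::nat) \<Longrightarrow> (j + i*n) mod n = j" by auto

lemma unv_carrier[simp]: "unv n v \<in> carrier_mat n n" by (simp add: unv_def)
lemma vecm_carrier[simp]: "vecm n X \<in> carrier_vec (n*n)" by (simp add: vecm_def)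
lemma unitm_carrier[simp]: "unitm n q \<in> carrier_mat n n" by (simp add: unitm_def)

lemma unv_vecm: "X \<in> carrier_mat n n \<Longrightarrow> unv n (vecm n X) = X"
  by (rule eq_matI) (auto simp: unv_def vecm_def idx1)

lemma vecm_unv: "v \<in> carrier_vec (n*n) \<Longrightarrow> vecm n (unv n v) = v"
  by (rule eq_vecI) (auto simp: unv_def vecm_def idx2)

lemma lin_expand:
  fixes \<phi> :: "real mat \<Rightarrow> real"
  assumes add: "\<And>X Y. X \<in> carrier_mat n n \<Longrightarrow> Y \<in> carrier_mat n n \<Longrightarrow> \<phi> (X + Y) = \<phi> X + \<phi> Y"
  and sm: "\<And>c X. X \<in> carrier_mat n n \<Longrightarrow> \<phi> (c \<cdot>\<^sub>m X) = c * \<phi> X"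
  and X: "X \<in> carrier_mat n n"
  shows "\<phi> X = (\<Sum>q<n*n. X $$ (q div n, q mod n) * \<phi> (unitm n q))"
proof -
  define S where "S k = mat n n (\<lambda>(i,j). if i*n+j < k then X $$ (i,j) else 0)" for k
  have Sc: "S k \<in> carrier_mat n n" for k by (simp add: S_def)
  have S0: "S 0 = 0 \<cdot>\<^sub>m S 0" by (rule eq_matI) (auto simp: S_def)
  have "\<phi> (S 0) = 0" using sm[OF Sc[of 0], of 0] S0 by (metis mult_zero_left)
  have Ssuc: "S (Suc k) = S k + X $$ (k div n, k mod n) \<cdot>\<^sub>m unitm n k" if "k < n*n" for k
  proof (rule eq_matI)
    fix i j assume ij: "i < dim_row (S k + X $$ (k div n, k mod n) \<cdot>\<^sub>m unitm n k)"
       "j < dim_col (S k + X $$ (k div n, k mod n) \<cdot>\<^sub>m unitm n k)"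
    then have ij': "i < n" "j < n" by (auto simp: S_def unitm_def)
    show "S (Suc k) $$ (i,j) = (S k + X $$ (k div n, k mod n) \<cdot>\<^sub>m unitm n k) $$ (i,j)"
    proof (cases "i*n+j = k")
      case True
      then have "k div n = i" "k mod n = j" using idx1[OF ij'] by auto
      then show ?thesis using ij' True by (simp add: S_def unitm_def)
    next
      case False
      then show ?thesis using ij' by (auto simp: S_def unitm_def)
    qed
  qed (auto simp: S_def unitm_def)
  have ind: "k \<le> n*n \<Longrightarrow> \<phi> (S k) = (\<Sum>q<k. X $$ (q div n, q mod n) * \<phi> (unitm n q))" for k
  proof (induction k)
    case 0 then show ?case using \<open>\<phi> (S 0) = 0\<close> by simp
  next
    case (Suc k)
    then have "\<phi> (S (Suc k)) = \<phi> (S k) + X $$ (k div n, k mod n) * \<phi> (unitm n k)"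
      using Ssuc[of k] add[OF Sc smult_carrier_mat[OF unitm_carrier]] sm[OF unitm_carrier] by simp
    then show ?case using Suc by simp
  qed
  have "S (n*n) = X" using X by (intro eq_matI) (auto simp: S_def idx1)
  then show ?thesis using ind[of "n*n"] by simp
qed

lemma msk_dims[simp]: "dim_row (msk A X) = dim_row A" "dim_col (msk A X) = dim_col A"
  by (auto simp: msk_def)

lemma msk_add: "A \<in> carrier_mat n n \<Longrightarrow> X \<in> carrier_mat n n \<Longrightarrow> Y \<in> carrier_mat n n \<Longrightarrow> msk A (X + Y) = msk A X + msk A Y"
  by (rule eq_matI) (auto simp: msk_def)
lemma msk_smult: "A \<in> carrier_mat n n \<Longrightarrow> X \<in> carrier_mat n n \<Longrightarrow> msk A (c \<cdot>\<^sub>m X) = c \<cdot>\<^sub>m msk A X"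
  by (rule eq_matI) (auto simp: msk_def)

lemma Fm_add: assumes A: "A \<in> carrier_mat n n" and X: "X \<in> carrier_mat n n" and Y: "Y \<in> carrier_mat n n"
  shows "Fm A (X + Y) = Fm A X + Fm A Y"
proof -
  have At: "transpose_mat A \<in> carrier_mat n n" using A by simp
  have "(X + Y) * transpose_mat A = X * transpose_mat A + Y * transpose_mat A"
    using add_mult_distrib_mat[OF X Y At] .
  moreover have "transpose_mat A * (X + Y) = transpose_mat A * X + transpose_mat A * Y"
    using mult_add_distrib_mat[OF At X Y] .
  ultimately show ?thesis unfolding Fm_def using A X Y At
    by (intro eq_matI) (auto simp del: transpose_carrier_mat)
qed

lemma Fm_smult: assumes A: "A \<in> carrier_mat n n" and X: "X \<in> carrier_mat n n"
  shows "Fm A (c \<cdot>\<^sub>m X) = c \<cdot>\<^sub>m Fm A X"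
proof -
  have At: "transpose_mat A \<in> carrier_mat n n" using A by simp
  have "(c \<cdot>\<^sub>m X) * transpose_mat A = c \<cdot>\<^sub>m (X * transpose_mat A)"
    using mult_smult_assoc_mat[OF X At] .
  moreover have "transpose_mat A * (c \<cdot>\<^sub>m X) = c \<cdot>\<^sub>m (transpose_mat A * X)"
    using mult_smult_distrib[OF At X] .
  ultimately show ?thesis unfolding Fm_def using A X At
    by (intro eq_matI) (auto simp del: transpose_carrier_mat simp: algebra_simps)
qed

lemma Tm_add: assumes A: "A \<in> carrier_mat n n" and X: "X \<in> carrier_mat n n" and Y: "Y \<in> carrier_mat n n"
  shows "Tm A (X + Y) = Tm A X + Tm A Y"
proof -
  have F: "Fm A X \<in> carrier_mat n n" "Fm A Y \<in> carrier_mat n n" using A X Y by auto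
  have "Fm A (X + Y) * A = Fm A X * A + Fm A Y * A"
    unfolding Fm_add[OF A X Y] using add_mult_distrib_mat[OF F A] .
  moreover have "A * Fm A (X + Y) = A * Fm A X + A * Fm A Y"
    unfolding Fm_add[OF A X Y] using mult_add_distrib_mat[OF A F] .
  ultimately show ?thesis unfolding Tm_def msk_add[OF A X Y] using A X Y F
    by (intro eq_matI) (auto simp del: Fm_carrier)
qed

lemma Tm_smult: assumes A: "A \<in> carrier_mat n n" and X: "X \<in> carrier_mat n n"
  shows "Tm A (c \<cdot>\<^sub>m X) = c \<cdot>\<^sub>m Tm A X"
proof -
  have F: "Fm A X \<in> carrier_mat n n" using A X by auto
  have "Fm A (c \<cdot>\<^sub>m X) * A = c \<cdot>\<^sub>m (Fm A X * A)"
    unfolding Fm_smult[OF A X] using mult_smult_assoc_mat[OF F A] .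
  moreover have "A * Fm A (c \<cdot>\<^sub>m X) = c \<cdot>\<^sub>m (A * Fm A X)"
    unfolding Fm_smult[OF A X] using mult_smult_distrib[OF A F] .
  ultimately show ?thesis unfolding Tm_def msk_smult[OF A X] using A X F
    by (intro eq_matI) (auto simp del: Fm_carrier simp: algebra_simps)
qed

definition Km :: "nat \<Rightarrow> real mat \<Rightarrow> real mat" where
  "Km n A = mat (n*n) (n*n) (\<lambda>(p,q). Tm A (unitm n q) $$ (p div n, p mod n))"

lemma Km_carrier[simp]: "Km n A \<in> carrier_mat (n*n) (n*n)" by (simp add: Km_def)

lemma Km_vecm: assumes A: "A \<in> carrier_mat n n" and X: "X \<in> carrier_mat n n"
  shows "Km n A *\<^sub>v vecm n X = vecm n (Tm A X)"
proof (rule eq_vecI)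
  fix p assume "p < dim_vec (vecm n (Tm A X))"
  then have p: "p < n*n" by (simp add: vecm_def)
  let ?\<phi> = "\<lambda>Y. Tm A Y $$ (p div n, p mod n)"
  have "?\<phi> X = (\<Sum>q<n*n. X $$ (q div n, q mod n) * ?\<phi> (unitm n q))"
  proof (rule lin_expand[OF _ _ X])
    fix Y Z :: "real mat" assume "Y \<in> carrier_mat n n" "Z \<in> carrier_mat n n"
    then show "?\<phi> (Y + Z) = ?\<phi> Y + ?\<phi> Z" using Tm_add[OF A] idx2[OF p] A
      carrier_matD[OF Tm_carrier[OF A \<open>Y \<in> carrier_mat n n\<close>]]
      carrier_matD[OF Tm_carrier[OF A \<open>Z \<in> carrier_mat n n\<close>]] by simp
  next
    fix c :: real and Y :: "real mat" assume "Y \<in> carrier_mat n n"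
    then show "?\<phi> (c \<cdot>\<^sub>m Y) = c * ?\<phi> Y" using Tm_smult[OF A] idx2[OF p] A
      carrier_matD[OF Tm_carrier[OF A \<open>Y \<in> carrier_mat n n\<close>]] by simp
  qed
  then show "(Km n A *\<^sub>v vecm n X) $ p = vecm n (Tm A X) $ p"
    using p by (simp add: Km_def vecm_def scalar_prod_def atLeast0LessThan mult.commute)
qed (simp add: Km_def vecm_def)

lemma Km_det: assumes A: "A \<in> carrier_mat n n" and ns: "nSSP A"
  shows "det (Km n A) \<noteq> 0"
proof
  assume "det (Km n A) = 0"
  then obtain v where v: "v \<in> carrier_vec (n*n)" "v \<noteq> 0\<^sub>v (n*n)" "Km n A *\<^sub>v v = 0\<^sub>v (n*n)"
    using det_0_iff_vec_prod_zero_field[OF Km_carrier] by blast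
  let ?X = "unv n v"
  have e: "Km n A *\<^sub>v vecm n ?X = vecm n (Tm A ?X)" by (rule Km_vecm[OF A unv_carrier])
  have "vecm n (Tm A ?X) = 0\<^sub>v (n*n)" using e unfolding vecm_unv[OF v(1)] v(3) by simp
  then have "Tm A ?X = unv n (0\<^sub>v (n*n))" using unv_vecm[OF Tm_carrier[OF A unv_carrier]] by metis
  also have "\<dots> = 0\<^sub>m n n" by (rule eq_matI) (auto simp: unv_def idx1)
  finally have "?X = 0\<^sub>m n n" using Tm_inj[OF A unv_carrier ns] by blast
  then have "v = vecm n (0\<^sub>m n n)" using vecm_unv[OF v(1)] by metis
  also have "\<dots> = 0\<^sub>v (n*n)" by (rule eq_vecI) (auto simp: vecm_def idx2)
  finally show False using v(2) by simp
qed

lemma sum_pairs: "(\<Sum>i<n. \<Sum>j<n. f (i*n+j)) = (\<Sum>p<n*(n::nat). (f p :: real))"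
proof -
  have "(\<Sum>i<m. \<Sum>j<n. f (i*n+j)) = (\<Sum>p<m*n. f p)" for m
  proof (induction m)
    case (Suc m)
    have "(\<Sum>p<Suc m * n. f p) = (\<Sum>p<m*n. f p) + (\<Sum>p\<in>{m*n..<m*n+n}. f p)"
      by (simp add: add.commute sum.atLeastLessThan_concat[symmetric] lessThan_atLeast0 sum.union_disjoint[symmetric] ivl_disj_un_two(3))
    also have "(\<Sum>p\<in>{m*n..<m*n+n}. f p) = (\<Sum>p\<in>{0+m*n..<n+m*n}. f p)" by (simp add: add.commute)
    also have "\<dots> = (\<Sum>j\<in>{0..<n}. f (j + m*n))" by (rule sum.shift_bounds_nat_ivl)
    also have "\<dots> = (\<Sum>j<n. f (m*n+j))" by (simp add: atLeast0LessThan add.commute)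
    finally show ?case using Suc by simp
  qed simp
  then show ?thesis by simp
qed

lemma T_surj: assumes A: "A \<in> carrier_mat n n" and ns: "nSSP A"
  shows "\<exists>Tinv c0. c0 \<ge> 0 \<and> (\<forall>W \<in> carrier_mat n n. Tinv W \<in> carrier_mat n n \<and> Tm A (Tinv W) = W)
     \<and> (\<forall>W1 \<in> carrier_mat n n. \<forall>W2 \<in> carrier_mat n n. nrm (Tinv W1 - Tinv W2) \<le> c0 * nrm (W1 - W2))"
proof -
  let ?K = "Km n A"
  have "?K \<in> Units (ring_mat TYPE(real) (n*n) undefined)"
    using det_non_zero_imp_unit[OF Km_carrier Km_det[OF A ns]] .
  then obtain B where B: "B \<in> carrier_mat (n*n) (n*n)" "?K * B = 1\<^sub>m (n*n)"
    unfolding Units_def ring_mat_def by auto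
  define Tinv where "Tinv W = unv n (B *\<^sub>v vecm n W)" for W
  have T1: "Tm A (Tinv W) = W" if W: "W \<in> carrier_mat n n" for W
  proof -
    have Bv: "B *\<^sub>v vecm n W \<in> carrier_vec (n*n)" using B by simp
    have e: "?K *\<^sub>v vecm n (Tinv W) = vecm n (Tm A (Tinv W))" unfolding Tinv_def by (rule Km_vecm[OF A unv_carrier])
    have "vecm n (Tm A (Tinv W)) = ?K *\<^sub>v (B *\<^sub>v vecm n W)"
      using e unfolding Tinv_def vecm_unv[OF Bv] by simp
    also have "\<dots> = vecm n W" using B assoc_mult_mat_vec[OF Km_carrier B(1) vecm_carrier, symmetric] by simp
    finally show ?thesis using unv_vecm W Tm_carrier[OF A unv_carrier] unfolding Tinv_def by metis
  qed
  have T2: "nrm (Tinv W1 - Tinv W2) \<le> nrm B * nrm (W1 - W2)"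
    if W: "W1 \<in> carrier_mat n n" "W2 \<in> carrier_mat n n" for W1 W2
  proof -
    let ?d = "\<lambda>q. W1 $$ (q div n, q mod n) - W2 $$ (q div n, q mod n)"
    have dq: "\<bar>?d q\<bar> \<le> nrm (W1 - W2)" if "q < n*n" for q
      using entry_le_nrm[of "q div n" "W1 - W2" "q mod n"] idx2[OF that] W by auto
    have "nrm (Tinv W1 - Tinv W2) = (\<Sum>i<n. \<Sum>j<n. \<bar>(\<Sum>q<n*n. B $$ (i*n+j, q) * ?d q)\<bar>)"
      unfolding nrm_def Tinv_def using B W carrier_matD[OF B(1)]
      by (auto intro!: sum.cong simp: unv_def vecm_def idx1 idx1' scalar_prod_def atLeast0LessThan
          sum_subtractf[symmetric] algebra_simps)
    also have "\<dots> = (\<Sum>p<n*n. \<bar>(\<Sum>q<n*n. B $$ (p, q) * ?d q)\<bar>)"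
      by (rule sum_pairs)
    also have "\<dots> \<le> (\<Sum>p<n*n. \<Sum>q<n*n. \<bar>B $$ (p, q)\<bar> * nrm (W1 - W2))"
    proof (intro sum_mono)
      fix p assume "p \<in> {..<n*n}"
      have "\<bar>(\<Sum>q<n*n. B $$ (p, q) * ?d q)\<bar> \<le> (\<Sum>q<n*n. \<bar>B $$ (p, q) * ?d q\<bar>)" by (rule sum_abs)
      also have "\<dots> \<le> (\<Sum>q<n*n. \<bar>B $$ (p, q)\<bar> * nrm (W1 - W2))"
        by (intro sum_mono) (auto simp: abs_mult intro: mult_left_mono dq)
      finally show "\<bar>(\<Sum>q<n*n. B $$ (p, q) * ?d q)\<bar> \<le> (\<Sum>q<n*n. \<bar>B $$ (p, q)\<bar> * nrm (W1 - W2))" .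
    qed
    also have "\<dots> = nrm B * nrm (W1 - W2)" using B unfolding nrm_def by (simp add: sum_distrib_right)
    finally show ?thesis .
  qed
  show ?thesis
    by (rule exI[of _ Tinv], rule exI[of _ "nrm B"]) (use T1 T2 nrm_nonneg in \<open>auto simp: Tinv_def\<close>)
qed

lemma nrm_transpose: "nrm (transpose_mat A) = nrm A"
  unfolding nrm_def by (simp, subst sum.swap, simp)

lemma nrm_msk: "X \<in> carrier_mat n n \<Longrightarrow> A \<in> carrier_mat n n \<Longrightarrow> nrm (msk A X) \<le> nrm X"
  unfolding nrm_def msk_def by (auto intro!: sum_mono)

lemma nrm_Fm: assumes A: "A \<in> carrier_mat n n" and X: "X \<in> carrier_mat n n"
  shows "nrm (Fm A X) \<le> 2 * nrm A * nrm X"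
proof -
  have At: "transpose_mat A \<in> carrier_mat n n" using A by simp
  have "nrm (Fm A X) \<le> nrm (X * transpose_mat A) + nrm (transpose_mat A * X)"
    unfolding Fm_def by (rule nrm_minus) (use X At in auto)
  also have "\<dots> \<le> nrm A * nrm X + nrm A * nrm X"
  proof -
    have "nrm (X * transpose_mat A) \<le> nrm A * nrm X" using nrm_mult[OF X At] nrm_transpose[of A] by (simp add: mult.commute)
    moreover have "nrm (transpose_mat A * X) \<le> nrm A * nrm X" using nrm_mult[OF At X] nrm_transpose[of A] by simp
    ultimately show ?thesis by linarith
  qed
  finally show ?thesis by simp
qed

lemma Fm_diff: assumes A: "A \<in> carrier_mat n n" and X: "X \<in> carrier_mat n n" and Y: "Y \<in> carrier_mat n n"
  shows "Fm A X - Fm A Y = Fm A (X - Y)"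
proof -
  have "X - Y = X + (-1) \<cdot>\<^sub>m Y" using X Y by (intro eq_matI) auto
  then have "Fm A (X - Y) = Fm A X + (-1) \<cdot>\<^sub>m Fm A Y"
    using Fm_add[OF A X smult_carrier_mat[OF Y]] Fm_smult[OF A Y] by simp
  then show ?thesis using Fm_carrier[OF A X] Fm_carrier[OF A Y] by (intro eq_matI) auto
qed

lemma msk_diff: assumes A: "A \<in> carrier_mat n n" and X: "X \<in> carrier_mat n n" and Y: "Y \<in> carrier_mat n n"
  shows "msk A X - msk A Y = msk A (X - Y)"
  using A X Y by (intro eq_matI) (auto simp: msk_def)

lemma G_diff_id: fixes D Z F1 F2 Y1 Y2 :: "real mat"
  assumes c: "D \<in> carrier_mat n n" "Z \<in> carrier_mat n n" "F1 \<in> carrier_mat n n" "F2 \<in> carrier_mat n n"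
     "Y1 \<in> carrier_mat n n" "Y2 \<in> carrier_mat n n"
  shows "(D - Z + D * F1 - F1 * Y1) - (D - Z + D * F2 - F2 * Y2) = D * (F1 - F2) - ((F1 - F2) * Y1 + F2 * (Y1 - Y2))"
proof -
  have e1: "D * (F1 - F2) = D * F1 - D * F2" using mult_minus_distrib_mat[OF c(1) c(3) c(4)] .
  have e2: "(F1 - F2) * Y1 = F1 * Y1 - F2 * Y1" using minus_mult_distrib_mat[OF c(3) c(4) c(5)] .
  have e3: "F2 * (Y1 - Y2) = F2 * Y1 - F2 * Y2" using mult_minus_distrib_mat[OF c(4) c(5) c(6)] .
  have d: "D * F1 \<in> carrier_mat n n" "D * F2 \<in> carrier_mat n n" "F1 * Y1 \<in> carrier_mat n n"
    "F2 * Y1 \<in> carrier_mat n n" "F2 * Y2 \<in> carrier_mat n n" using c by auto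
  show ?thesis unfolding e1 e2 e3 using c d by (intro eq_matI) (auto dest!: carrier_matD)
qed

lemma vnorm_bound: fixes F :: "real mat" and v :: "real vec"
  assumes F: "F \<in> carrier_mat n n" and v: "v \<in> carrier_vec n"
  shows "(\<Sum>i<n. \<bar>(F *\<^sub>v v) $ i\<bar>) \<le> nrm F * (\<Sum>j<n. \<bar>v $ j\<bar>)"
proof -
  have "(\<Sum>i<n. \<bar>(F *\<^sub>v v) $ i\<bar>) = (\<Sum>i<n. \<bar>\<Sum>j<n. F $$ (i,j) * v $ j\<bar>)"
    using F v by (auto intro!: sum.cong simp: scalar_prod_def atLeast0LessThan)
  also have "\<dots> \<le> (\<Sum>i<n. \<Sum>j<n. \<bar>F $$ (i,j)\<bar> * \<bar>v $ j\<bar>)"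
    by (intro sum_mono) (auto simp: abs_mult[symmetric] intro: sum_abs)
  also have "\<dots> \<le> (\<Sum>i<n. \<Sum>j<n. \<bar>F $$ (i,j)\<bar> * (\<Sum>j<n. \<bar>v $ j\<bar>))"
    by (intro sum_mono mult_left_mono) (auto intro: member_le_sum)
  also have "\<dots> = nrm F * (\<Sum>j<n. \<bar>v $ j\<bar>)" using F unfolding nrm_def by (simp add: sum_distrib_right)
  finally show ?thesis .
qed

lemma det_one_plus: fixes F :: "real mat"
  assumes F: "F \<in> carrier_mat n n" and nF: "nrm F < 1"
  shows "det (1\<^sub>m n + F) \<noteq> 0"
proof
  assume "det (1\<^sub>m n + F) = 0"
  then obtain v where v: "v \<in> carrier_vec n" "v \<noteq> 0\<^sub>v n" "(1\<^sub>m n + F) *\<^sub>v v = 0\<^sub>v n"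
    using det_0_iff_vec_prod_zero_field[of "1\<^sub>m n + F" n] F by auto
  have "(1\<^sub>m n + F) *\<^sub>v v = v + F *\<^sub>v v" using add_mult_distrib_mat_vec[OF one_carrier_mat F v(1)] v by simp
  then have vi: "v $ i = - ((F *\<^sub>v v) $ i)" if "i < n" for i
    using v(3) that F v(1) by (metis add.commute add_eq_0_iff carrier_matD(1) carrier_vecD index_add_vec(1) index_mult_mat_vec index_zero_vec(1) dim_mult_mat_vec)
  let ?s = "\<Sum>j<n. \<bar>v $ j\<bar>"
  have "?s = (\<Sum>i<n. \<bar>(F *\<^sub>v v) $ i\<bar>)" using vi by (auto intro!: sum.cong)
  also have "\<dots> \<le> nrm F * ?s" by (rule vnorm_bound[OF F v(1)])
  finally have le: "?s \<le> nrm F * ?s" .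
  have "?s > 0"
  proof (rule ccontr)
    assume "\<not> ?s > 0"
    moreover have "?s \<ge> 0" by (intro sum_nonneg) auto
    ultimately have "?s = 0" by linarith
    then have "\<forall>j\<in>{..<n}. \<bar>v $ j\<bar> = 0" by (subst (asm) sum_nonneg_eq_0_iff) auto
    then have "v = 0\<^sub>v n" using v(1) by (intro eq_vecI) auto
    with v(2) show False ..
  qed
  with le nF show False
    by (smt (verit) mult_less_cancel_right2)
qed

lemma sim_char_poly: fixes A D M F :: "real mat"
  assumes c: "A \<in> carrier_mat n n" "D \<in> carrier_mat n n" "M \<in> carrier_mat n n" "F \<in> carrier_mat n n"
  and nF: "nrm F < 1"
  and eq: "(1\<^sub>m n + F) * M = (A + D) * (1\<^sub>m n + F)"
  shows "char_poly M = char_poly (A + D)"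
proof -
  let ?Q = "1\<^sub>m n + F"
  have Q: "?Q \<in> carrier_mat n n" using c by simp
  have "?Q \<in> Units (ring_mat TYPE(real) n undefined)"
    using det_non_zero_imp_unit[OF Q det_one_plus[OF c(4) nF]] .
  then obtain P where P: "P \<in> carrier_mat n n" "P * ?Q = 1\<^sub>m n" "?Q * P = 1\<^sub>m n"
    unfolding Units_def ring_mat_def by auto
  have AD: "A + D \<in> carrier_mat n n" using c by simp
  have "M = P * (A + D) * ?Q"
  proof -
    have "(P * ?Q) * M = M" unfolding P(2) using c(3) by simp
    then have "M = (P * ?Q) * M" by simp
    also have "\<dots> = P * (?Q * M)" using P Q c by (intro assoc_mult_mat) auto
    also have "\<dots> = P * ((A + D) * ?Q)" using eq by simp
    also have "\<dots> = P * (A + D) * ?Q" using P Q AD by simp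
    finally show ?thesis .
  qed
  then have "similar_mat_wit M (A + D) P ?Q"
    unfolding similar_mat_wit_def Let_def using P Q AD c by (auto simp del: assoc_mult_mat)
  then have "similar_mat M (A + D)" unfolding similar_mat_def by blast
  then show ?thesis by (rule char_poly_similar)
qed

lemma local_sim:
  assumes A: "A \<in> carrier_mat n n" and ns: "nSSP A" and mu: "\<mu> > 0"
  shows "\<exists>\<delta>>0. \<forall>D \<in> carrier_mat n n. \<forall>Z \<in> carrier_mat n n. nrm D \<le> \<delta> \<longrightarrow> nrm Z \<le> \<delta> \<longrightarrow>
     (\<exists>X \<in> carrier_mat n n. nrm X \<le> \<mu> \<and> char_poly (A + msk A X + Z) = char_poly (A + D))"
proof -
  obtain Tinv c0 where c0: "c0 \<ge> 0"
    and T1: "\<And>W. W \<in> carrier_mat n n \<Longrightarrow> Tinv W \<in> carrier_mat n n \<and> Tm A (Tinv W) = W"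
    and T2: "\<And>W1 W2. W1 \<in> carrier_mat n n \<Longrightarrow> W2 \<in> carrier_mat n n \<Longrightarrow> nrm (Tinv W1 - Tinv W2) \<le> c0 * nrm (W1 - W2)"
    using T_surj[OF A ns] by blast
  have Tinv0: "Tinv (0\<^sub>m n n) = 0\<^sub>m n n" using T1[of "0\<^sub>m n n"] Tm_inj[OF A _ ns] by auto
  have Tb: "nrm (Tinv W) \<le> c0 * nrm W" if W: "W \<in> carrier_mat n n" for W
  proof -
    have "Tinv W - Tinv (0\<^sub>m n n) = Tinv W" using T1[OF W] Tinv0 by auto
    moreover have "W - 0\<^sub>m n n = W" using W by auto
    ultimately show ?thesis using T2[OF W, of "0\<^sub>m n n"] by simp
  qed
  define a where "a = 2 * nrm A + 1"
  define c where "c = c0 + 1"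
  have a1: "a \<ge> 1" using nrm_nonneg[of A] by (simp add: a_def)
  have c1: "c \<ge> 1" using c0 by (simp add: c_def)
  define \<rho> where "\<rho> = min \<mu> (1 / (8 * c * a))"
  define \<delta> where "\<delta> = \<rho> / (4 * c)"
  have \<rho>0: "\<rho> > 0" using mu a1 c1 by (simp add: \<rho>_def)
  have \<rho>\<mu>: "\<rho> \<le> \<mu>" by (simp add: \<rho>_def)
  have ca\<rho>: "c * a * \<rho> \<le> 1/8"
  proof -
    have "\<rho> \<le> 1 / (8 * c * a)" by (simp add: \<rho>_def)
    then have "c * a * \<rho> \<le> c * a * (1 / (8 * c * a))" using a1 c1 by (intro mult_left_mono) auto
    also have "\<dots> = 1/8" using a1 c1 by simp
    finally show ?thesis .
  qed
  have a\<rho>: "a * \<rho> \<le> 1/8"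
  proof -
    have "1 * (a * \<rho>) \<le> c * (a * \<rho>)" using c1 a1 \<rho>0 by (intro mult_right_mono) auto
    then show ?thesis using ca\<rho> by (simp add: mult.assoc)
  qed
  have \<delta>0: "\<delta> > 0" using \<rho>0 c1 by (simp add: \<delta>_def)
  have c\<delta>: "c * \<delta> = \<rho> / 4" using c1 by (simp add: \<delta>_def)
  have \<delta>\<rho>: "\<delta> \<le> \<rho>"
  proof -
    have "\<delta> \<le> c * \<delta>" using c1 \<delta>0 by simp
    then show ?thesis using c\<delta> \<rho>0 by linarith
  qed
  show ?thesis
  proof (intro exI[of _ \<delta>] conjI ballI impI \<delta>0)
    fix D Z assume D: "D \<in> carrier_mat n n" and Z: "Z \<in> carrier_mat n n"
      and nD: "nrm D \<le> \<delta>" and nZ: "nrm Z \<le> \<delta>"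
    define G where "G X = D - Z + D * Fm A X - Fm A X * (msk A X + Z)" for X
    have Fc: "X \<in> carrier_mat n n \<Longrightarrow> Fm A X \<in> carrier_mat n n" for X using A by simp
    have Mc: "msk A X \<in> carrier_mat n n" for X using A by simp
    have Gc: "X \<in> carrier_mat n n \<Longrightarrow> G X \<in> carrier_mat n n" for X
      unfolding G_def using D Z Fc[of X] Mc[of X] by (intro minus_carrier_mat mult_carrier_mat[of _ n n]) auto
    have nF: "X \<in> carrier_mat n n \<Longrightarrow> nrm (Fm A X) \<le> a * nrm X" for X
      using nrm_Fm[OF A, of X] nrm_nonneg[of X] by (smt (verit, best) a_def mult_right_mono)
    have nM: "X \<in> carrier_mat n n \<Longrightarrow> nrm (msk A X) \<le> nrm X" for X using nrm_msk A by blast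
    have Gb: "nrm (G X) \<le> 2 * \<delta> + \<delta> * (a * \<rho>) + a * \<rho> * (\<rho> + \<delta>)"
      if X: "X \<in> carrier_mat n n" "nrm X \<le> \<rho>" for X
    proof -
      let ?F = "Fm A X" and ?M = "msk A X"
      have F: "?F \<in> carrier_mat n n" using Fc X by blast
      have nF': "nrm ?F \<le> a * \<rho>" using nF[OF X(1)] X(2) a1 by (smt (verit) mult_left_mono)
      have nMZ: "nrm (?M + Z) \<le> \<rho> + \<delta>" using nrm_add[OF Mc[of X] Z] nM[OF X(1)] X(2) nZ by linarith
      have "nrm (G X) \<le> nrm (D - Z + D * ?F) + nrm (?F * (?M + Z))"
        unfolding G_def by (rule nrm_minus) (use D Z F Mc in auto)
      also have "nrm (D - Z + D * ?F) \<le> nrm (D - Z) + nrm (D * ?F)"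
        by (rule nrm_add) (use D Z F in auto)
      also have "nrm (D - Z) \<le> nrm D + nrm Z" by (rule nrm_minus[OF D Z])
      also have "nrm (D * ?F) \<le> nrm D * nrm ?F" by (rule nrm_mult[OF D F])
      also have "nrm (?F * (?M + Z)) \<le> nrm ?F * nrm (?M + Z)" by (rule nrm_mult) (use F Mc Z in auto)
      finally have "nrm (G X) \<le> nrm D + nrm Z + nrm D * nrm ?F + nrm ?F * nrm (?M + Z)" by simp
      moreover have "nrm D * nrm ?F \<le> \<delta> * (a * \<rho>)"
        using nD nF' by (intro mult_mono) (use \<delta>0 \<rho>0 a1 in \<open>auto simp: nrm_nonneg\<close>)
      moreover have "nrm ?F * nrm (?M + Z) \<le> a * \<rho> * (\<rho> + \<delta>)"
        using nMZ nF' by (intro mult_mono) (use \<delta>0 \<rho>0 a1 in \<open>auto simp: nrm_nonneg\<close>)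
      ultimately show ?thesis using nD nZ by linarith
    qed
    have Gl: "nrm (G X1 - G X2) \<le> a * (2 * \<delta> + 2 * \<rho>) * nrm (X1 - X2)"
      if X1: "X1 \<in> carrier_mat n n" "nrm X1 \<le> \<rho>" and X2: "X2 \<in> carrier_mat n n" "nrm X2 \<le> \<rho>" for X1 X2
    proof -
      let ?F1 = "Fm A X1" and ?F2 = "Fm A X2" and ?Y1 = "msk A X1 + Z" and ?Y2 = "msk A X2 + Z"
      let ?d = "nrm (X1 - X2)"
      have F1: "?F1 \<in> carrier_mat n n" and F2: "?F2 \<in> carrier_mat n n" using Fc X1 X2 by auto
      have Y1: "?Y1 \<in> carrier_mat n n" and Y2: "?Y2 \<in> carrier_mat n n" using Mc Z by auto
      have X12: "X1 - X2 \<in> carrier_mat n n" using X1 X2 by auto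
      have "G X1 - G X2 = D * (?F1 - ?F2) - ((?F1 - ?F2) * ?Y1 + ?F2 * (?Y1 - ?Y2))"
        unfolding G_def by (rule G_diff_id[OF D Z F1 F2 Y1 Y2])
      moreover have "?F1 - ?F2 = Fm A (X1 - X2)" by (rule Fm_diff[OF A X1(1) X2(1)])
      moreover have "?Y1 - ?Y2 = msk A (X1 - X2)"
      proof -
        have "?Y1 - ?Y2 = msk A X1 - msk A X2" using Mc[of X1] Mc[of X2] carrier_matD[OF Z] carrier_matD[OF A] by (intro eq_matI) auto
        then show ?thesis using msk_diff[OF A X1(1) X2(1)] by simp
      qed
      ultimately have eqG: "G X1 - G X2 = D * Fm A (X1 - X2) - (Fm A (X1 - X2) * ?Y1 + ?F2 * msk A (X1 - X2))"
        by simp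
      have F12: "Fm A (X1 - X2) \<in> carrier_mat n n" using Fc X12 by blast
      have nF12: "nrm (Fm A (X1 - X2)) \<le> a * ?d" using nF[OF X12] .
      have nF2: "nrm ?F2 \<le> a * \<rho>" using nF[OF X2(1)] X2(2) a1 by (smt (verit) mult_left_mono)
      have nY1: "nrm ?Y1 \<le> \<rho> + \<delta>" using nrm_add[OF Mc[of X1] Z] nM[OF X1(1)] X1(2) nZ by linarith
      have nM12: "nrm (msk A (X1 - X2)) \<le> ?d" using nM[OF X12] .
      have "nrm (G X1 - G X2) \<le> nrm (D * Fm A (X1 - X2)) + nrm (Fm A (X1 - X2) * ?Y1 + ?F2 * msk A (X1 - X2))"
        unfolding eqG by (rule nrm_minus) (use D F12 Y1 F2 Mc in auto)
      also have "nrm (Fm A (X1 - X2) * ?Y1 + ?F2 * msk A (X1 - X2)) \<le> nrm (Fm A (X1 - X2) * ?Y1) + nrm (?F2 * msk A (X1 - X2))"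
        by (rule nrm_add) (use F12 Y1 F2 Mc in auto)
      also have "nrm (D * Fm A (X1 - X2)) \<le> nrm D * nrm (Fm A (X1 - X2))" by (rule nrm_mult[OF D F12])
      also have "nrm (Fm A (X1 - X2) * ?Y1) \<le> nrm (Fm A (X1 - X2)) * nrm ?Y1" by (rule nrm_mult[OF F12 Y1])
      also have "nrm (?F2 * msk A (X1 - X2)) \<le> nrm ?F2 * nrm (msk A (X1 - X2))" by (rule nrm_mult[OF F2 Mc])
      finally have le: "nrm (G X1 - G X2) \<le> nrm D * nrm (Fm A (X1 - X2)) + nrm (Fm A (X1 - X2)) * nrm ?Y1 + nrm ?F2 * nrm (msk A (X1 - X2))"
        by simp
      have t1: "nrm D * nrm (Fm A (X1 - X2)) \<le> \<delta> * (a * ?d)"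
        using nD nF12 by (intro mult_mono) (use \<delta>0 \<rho>0 a1 in \<open>auto simp: nrm_nonneg\<close>)
      have t2: "nrm (Fm A (X1 - X2)) * nrm ?Y1 \<le> (a * ?d) * (\<rho> + \<delta>)"
        using nY1 nF12 \<rho>0 \<delta>0 by (intro mult_mono) (use \<delta>0 \<rho>0 a1 in \<open>auto simp: nrm_nonneg\<close>)
      have t3: "nrm ?F2 * nrm (msk A (X1 - X2)) \<le> (a * \<rho>) * ?d"
        using nF2 nM12 a1 \<rho>0 by (intro mult_mono) (use \<delta>0 \<rho>0 a1 in \<open>auto simp: nrm_nonneg\<close>)
      have "\<delta> * (a * ?d) + (a * ?d) * (\<rho> + \<delta>) + (a * \<rho>) * ?d = a * (2 * \<delta> + 2 * \<rho>) * ?d"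
        by (simp add: algebra_simps)
      then show ?thesis using le t1 t2 t3 by linarith
    qed
    define \<Psi> where "\<Psi> X = Tinv (G X)" for X
    have "\<exists>X \<in> carrier_mat n n. nrm X \<le> \<rho> \<and> \<Psi> X = X"
    proof (rule fixpoint[of "1/2"])
      show "0 \<le> \<rho>" using \<rho>0 by simp
    next
      fix X assume X: "X \<in> carrier_mat n n" "nrm X \<le> \<rho>"
      have "nrm (\<Psi> X) \<le> c0 * nrm (G X)" unfolding \<Psi>_def by (rule Tb[OF Gc[OF X(1)]])
      also have "\<dots> \<le> c * nrm (G X)" using nrm_nonneg[of "G X"] by (simp add: c_def algebra_simps)
      also have "\<dots> \<le> c * (2 * \<delta> + \<delta> * (a * \<rho>) + a * \<rho> * (\<rho> + \<delta>))"
        using Gb[OF X] c1 by (intro mult_left_mono) auto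
      also have "\<dots> = 2 * (c * \<delta>) + (c * \<delta>) * (a * \<rho>) + (c * a * \<rho>) * (\<rho> + \<delta>)"
        by (simp add: algebra_simps)
      also have "\<dots> \<le> 2 * (\<rho>/4) + (\<rho>/4) * (1/8) + (1/8) * (\<rho> + \<rho>)"
      proof -
        have "(c * \<delta>) * (a * \<rho>) \<le> (\<rho>/4) * (1/8)" unfolding c\<delta> using a\<rho> \<rho>0 by (intro mult_left_mono) auto
        moreover have "(c * a * \<rho>) * (\<rho> + \<delta>) \<le> (1/8) * (\<rho> + \<rho>)"
          using ca\<rho> \<delta>\<rho> \<rho>0 \<delta>0 a1 c1 by (intro mult_mono) auto
        ultimately show ?thesis unfolding c\<delta> by linarith
      qed
      also have "\<dots> \<le> \<rho>" using \<rho>0 by simp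
      finally show "\<Psi> X \<in> carrier_mat n n \<and> nrm (\<Psi> X) \<le> \<rho>"
        using T1[OF Gc[OF X(1)]] unfolding \<Psi>_def by simp
    next
      fix X Y assume X: "X \<in> carrier_mat n n" "nrm X \<le> \<rho>" and Y: "Y \<in> carrier_mat n n" "nrm Y \<le> \<rho>"
      have "nrm (\<Psi> X - \<Psi> Y) \<le> c0 * nrm (G X - G Y)" unfolding \<Psi>_def by (rule T2[OF Gc[OF X(1)] Gc[OF Y(1)]])
      also have "\<dots> \<le> c * nrm (G X - G Y)" using nrm_nonneg[of "G X - G Y"] by (simp add: c_def algebra_simps)
      also have "\<dots> \<le> c * (a * (2 * \<delta> + 2 * \<rho>) * nrm (X - Y))"
        using Gl[OF X Y] c1 by (intro mult_left_mono) auto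
      also have "\<dots> = (c * a * \<rho>) * (2 * (\<delta> / \<rho>) + 2) * nrm (X - Y)"
        using \<rho>0 by (simp add: field_simps)
      also have "\<dots> \<le> (1/8) * 4 * nrm (X - Y)"
      proof -
        have "\<delta> / \<rho> \<le> 1" using \<delta>\<rho> \<rho>0 by simp
        then have "2 * (\<delta> / \<rho>) + 2 \<le> 4" by linarith
        moreover have "0 \<le> c * a * \<rho>" using a1 c1 \<rho>0 by simp
        ultimately have "(c * a * \<rho>) * (2 * (\<delta> / \<rho>) + 2) \<le> (1/8) * 4"
          using ca\<rho> \<delta>0 \<rho>0 by (intro mult_mono) auto
        then show ?thesis using nrm_nonneg[of "X - Y"] by (intro mult_right_mono) auto
      qed
      finally show "nrm (\<Psi> X - \<Psi> Y) \<le> 1/2 * nrm (X - Y)" by simp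
    qed auto
    then obtain X where X: "X \<in> carrier_mat n n" "nrm X \<le> \<rho>" "\<Psi> X = X" by blast
    have TG: "Tm A X = G X" using T1[OF Gc[OF X(1)]] X(3) unfolding \<Psi>_def by simp
    let ?F = "Fm A X" and ?M = "msk A X"
    have F: "?F \<in> carrier_mat n n" using Fc X by blast
    have nF': "nrm ?F < 1"
    proof -
      have "nrm ?F \<le> a * \<rho>" using nF[OF X(1)] X(2) a1 by (smt (verit) mult_left_mono)
      then show ?thesis using a\<rho> by linarith
    qed
    have Mc': "?M \<in> carrier_mat n n" using Mc .
    have eq: "(1\<^sub>m n + ?F) * (A + ?M + Z) = (A + D) * (1\<^sub>m n + ?F)"
    proof -
      have AMZ: "A + ?M + Z \<in> carrier_mat n n" using A Mc' Z by auto
      have l: "(1\<^sub>m n + ?F) * (A + ?M + Z) = (A + ?M + Z) + (?F * A + ?F * (?M + Z))"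
      proof -
        have "(1\<^sub>m n + ?F) * (A + ?M + Z) = 1\<^sub>m n * (A + ?M + Z) + ?F * (A + ?M + Z)"
          by (rule add_mult_distrib_mat[OF one_carrier_mat F AMZ])
        moreover have "A + ?M + Z = A + (?M + Z)" using A Mc' Z by (intro eq_matI) auto
        moreover have "?F * (A + (?M + Z)) = ?F * A + ?F * (?M + Z)"
          by (rule mult_add_distrib_mat[OF F A]) (use Mc' Z in auto)
        moreover have "1\<^sub>m n * (A + (?M + Z)) = A + (?M + Z)" by (rule left_mult_one_mat) (use A Mc' Z in auto)
        ultimately show ?thesis by simp
      qed
      have r: "(A + D) * (1\<^sub>m n + ?F) = (A + A * ?F) + (D + D * ?F)"
      proof -
        have "(A + D) * (1\<^sub>m n + ?F) = A * (1\<^sub>m n + ?F) + D * (1\<^sub>m n + ?F)"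
          by (rule add_mult_distrib_mat[OF A D]) (use F in auto)
        moreover have "A * (1\<^sub>m n + ?F) = A * 1\<^sub>m n + A * ?F" by (rule mult_add_distrib_mat[OF A one_carrier_mat F])
        moreover have "D * (1\<^sub>m n + ?F) = D * 1\<^sub>m n + D * ?F" by (rule mult_add_distrib_mat[OF D one_carrier_mat F])
        ultimately show ?thesis using A D by simp
      qed
      have TG': "?M + ?F * A - A * ?F = D - Z + D * ?F - ?F * (?M + Z)" using TG unfolding Tm_def G_def .
      have cs: "?F * A \<in> carrier_mat n n" "?F * (?M + Z) \<in> carrier_mat n n" "A * ?F \<in> carrier_mat n n"
        "D * ?F \<in> carrier_mat n n" using F A D Mc' Z by auto
      show ?thesis unfolding l r
      proof (rule eq_matI)
        fix i j assume ij: "i < dim_row (A + A * ?F + (D + D * ?F))" "j < dim_col (A + A * ?F + (D + D * ?F))"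
        then have ij': "i < n" "j < n" using cs D by auto
        have dd: "dim_row (?F * A) = n" "dim_col (?F * A) = n" "dim_row (?F * (?M + Z)) = n" "dim_col (?F * (?M + Z)) = n"
          "dim_row (A * ?F) = n" "dim_col (A * ?F) = n" "dim_row (D * ?F) = n" "dim_col (D * ?F) = n"
          "dim_row ?M = n" "dim_col ?M = n" "dim_row Z = n" "dim_col Z = n" "dim_row D = n" "dim_col D = n"
          "dim_row A = n" "dim_col A = n"
          using cs Mc' Z D A carrier_matD[OF F] by (simp_all add: carrier_matD)
        have "(?M + ?F * A - A * ?F) $$ (i,j) = (D - Z + D * ?F - ?F * (?M + Z)) $$ (i,j)" using TG' by simp
        then have h: "?M $$ (i,j) + (?F * A) $$ (i,j) - (A * ?F) $$ (i,j) = D $$ (i,j) - Z $$ (i,j) + (D * ?F) $$ (i,j) - (?F * (?M + Z)) $$ (i,j)"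
          using ij' dd by (simp del: index_mult_mat)
        have "(A + ?M + Z + (?F * A + ?F * (?M + Z))) $$ (i,j) = A $$ (i,j) + ?M $$ (i,j) + Z $$ (i,j) + ((?F * A) $$ (i,j) + (?F * (?M + Z)) $$ (i,j))"
          using ij' dd by (simp del: index_mult_mat)
        moreover have "(A + A * ?F + (D + D * ?F)) $$ (i,j) = A $$ (i,j) + (A * ?F) $$ (i,j) + (D $$ (i,j) + (D * ?F) $$ (i,j))"
          using ij' dd by (simp del: index_mult_mat)
        ultimately show "(A + ?M + Z + (?F * A + ?F * (?M + Z))) $$ (i,j) = (A + A * ?F + (D + D * ?F)) $$ (i,j)"
          using h by linarith
      qed (use cs D A Mc' Z F in \<open>simp_all add: carrier_matD\<close>)
    qed
    have cp: "char_poly (A + ?M + Z) = char_poly (A + D)"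
      by (rule sim_char_poly[OF A D _ F nF' eq]) (use A Mc' Z in auto)
    have "nrm X \<le> \<mu>" using X(2) \<rho>\<mu> by linarith
    then show "\<exists>X \<in> carrier_mat n n. nrm X \<le> \<mu> \<and> char_poly (A + msk A X + Z) = char_poly (A + D)"
      using X(1) cp by blast
  qed
qed

lemma nilp_char_poly: fixes A :: "real mat"
  assumes A: "A \<in> carrier_mat n n" and nil: "A ^\<^sub>m k = 0\<^sub>m n n"
  shows "char_poly A = [:0,1:]^n"
proof -
  let ?C = "map_mat complex_of_real A"
  have C: "?C \<in> carrier_mat n n" using A by simp
  obtain as where cp: "char_poly ?C = (\<Prod>a\<leftarrow>as. [:-a,1:])" and len: "length as = n"
    using char_poly_factorized[OF C] by blast
  have a0: "a = 0" if a: "a \<in> set as" for a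
  proof -
    obtain xs ys where as: "as = xs @ a # ys" using split_list[OF a] by blast
    have "poly (char_poly ?C) a = 0" unfolding cp as by simp
    then have "eigenvalue ?C a" using eigenvalue_root_char_poly[OF C] by simp
    then obtain v where ev: "eigenvector ?C v a" unfolding eigenvalue_def by blast
    have "?C ^\<^sub>m k *\<^sub>v v = a ^ k \<cdot>\<^sub>v v" by (rule eigenvector_pow[OF C ev])
    moreover have "?C ^\<^sub>m k = 0\<^sub>m n n"
    proof -
      have "map_mat complex_of_real (0\<^sub>m n n) = 0\<^sub>m n n" by (rule eq_matI) auto
      then show ?thesis using of_real_hom.mat_hom_pow[OF A, of k] nil by metis
    qed
    moreover have v: "v \<in> carrier_vec n" "v \<noteq> 0\<^sub>v n" using ev C unfolding eigenvector_def by auto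
    moreover have "0\<^sub>m n n *\<^sub>v v = (0\<^sub>v n :: complex vec)" using v by (intro eq_vecI) (auto simp: scalar_prod_def)
    ultimately have "a ^ k \<cdot>\<^sub>v v = 0\<^sub>v n" by simp
    moreover obtain i where i: "i < n" "v $ i \<noteq> 0"
      using v by (metis carrier_vecD eq_vecI index_zero_vec(1) index_zero_vec(2))
    ultimately have "a ^ k * v $ i = 0" by (metis index_smult_vec(1) index_zero_vec(1) carrier_vecD v(1))
    then show "a = 0" using i by simp
  qed
  then have "\<forall>y\<in>set as. y = 0" by blast
  then have "replicate (length as) 0 = as" by (rule replicate_length_same)
  then have "as = replicate n 0" using len by simp
  then have "char_poly ?C = [:0,1:]^n" using cp by simp
  then have e: "map_poly complex_of_real (char_poly A) = [:0,1:]^n"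
    using of_real_hom.char_poly_hom[OF A] by metis
  show ?thesis
  proof (rule poly_eqI)
    fix i
    have m: "([:0,1:]^n :: 'b::comm_ring_1 poly) = monom 1 n" by (simp add: monom_altdef)
    have "complex_of_real (coeff (char_poly A) i) = coeff ([:0,1:]^n :: complex poly) i"
      using arg_cong[OF e, of "\<lambda>p. coeff p i"] by (simp add: coeff_map_poly)
    also have "\<dots> = (if n = i then 1 else 0)" unfolding m by (simp add: coeff_monom)
    finally have "coeff (char_poly A) i = (if n = i then 1 else 0)" by (auto split: if_splits)
    then show "coeff (char_poly A) i = coeff ([:0,1:]^n) i" unfolding m by (simp add: coeff_monom)
  qed
qed

lemma jordan_entries: assumes "\<forall>(m,a) \<in> set n_as. a = (0::real)"
  and "i < sum_list (map fst n_as)" "j < sum_list (map fst n_as)"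
  and "jordan_matrix n_as $$ (i,j) \<noteq> 0"
  shows "j = Suc i"
  using assms
proof (induction n_as arbitrary: i j)
  case Nil then show ?case by simp
next
  case (Cons ma n_as)
  obtain m a where ma: "ma = (m,a)" by force
  let ?N = "sum_list (map fst n_as)"
  have a: "a = 0" using Cons.prems ma by auto
  have J: "jordan_matrix (ma # n_as) $$ (i,j) = (if i < m then if j < m then jordan_block m a $$ (i,j) else 0
      else if j < m then 0 else jordan_matrix n_as $$ (i - m, j - m))"
    unfolding ma jordan_matrix_Cons using Cons.prems ma by (subst index_mat_four_block) auto
  show ?case
  proof (cases "i < m")
    case True
    then show ?thesis using J Cons.prems a by (auto split: if_splits simp: jordan_block_index)
  next
    case False
    then have j: "\<not> j < m" and nz: "jordan_matrix n_as $$ (i - m, j - m) \<noteq> 0" using J Cons.prems by (auto split: if_splits)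
    have N1: "sum_list (map fst (ma # n_as)) = m + ?N" using ma by simp
    have h1: "\<forall>(m,a) \<in> set n_as. a = (0::real)" using Cons.prems(1) by auto
    have h2: "i - m < ?N" using Cons.prems(2) N1 False by linarith
    have h3: "j - m < ?N" using Cons.prems(3) N1 j by linarith
    have "j - m = Suc (i - m)" by (rule Cons.IH[OF h1 h2 h3 nz])
    then show ?thesis using False j by simp
  qed
qed

lemma nilp_jordan: fixes A :: "real mat"
  assumes A: "A \<in> carrier_mat n n" and nil: "nilpotent_mat A"
  shows "\<exists>J P Q. J \<in> carrier_mat n n \<and> P \<in> carrier_mat n n \<and> Q \<in> carrier_mat n n \<and> P * Q = 1\<^sub>m n \<and> Q * P = 1\<^sub>m n
     \<and> A = P * J * Q \<and> (\<forall>i<n. \<forall>j<n. J $$ (i,j) \<noteq> 0 \<longrightarrow> j = Suc i)"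
proof -
  obtain k where k: "A ^\<^sub>m k = 0\<^sub>m n n" using nil A unfolding nilpotent_mat_def by auto
  have cp: "char_poly A = [:0,1:]^n" by (rule nilp_char_poly[OF A k])
  then have "char_poly A = (\<Prod>a\<leftarrow>replicate n (0::real). [:-a,1:])" by simp
  then obtain n_as where jnf: "jordan_nf A n_as" using jordan_nf_exists[OF A] by blast
  then have sim: "similar_mat A (jordan_matrix n_as)" and nz: "0 \<notin> fst ` set n_as" unfolding jordan_nf_def by auto
  have cpJ: "char_poly A = (\<Prod>(m,a)\<leftarrow>n_as. [:-a,1:]^m)" using jordan_nf_char_poly[OF jnf] .
  have a0: "\<forall>(m,a) \<in> set n_as. a = 0"
  proof (intro ballI, clarify)
    fix m a assume ma: "(m,a) \<in> set n_as"
    then have m: "m > 0" using nz by force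
    obtain xs ys where nas: "n_as = xs @ (m,a) # ys" using split_list[OF ma] by blast
    have "poly (char_poly A) a = 0" unfolding cpJ nas using m by (simp add: poly_prod_list)
    then have "a ^ n = 0" unfolding cp by (simp add: poly_power)
    then show "a = 0" by simp
  qed
  obtain P Q where wit: "similar_mat_wit A (jordan_matrix n_as) P Q" using sim unfolding similar_mat_def by blast
  then have c: "A \<in> carrier_mat n n" "jordan_matrix n_as \<in> carrier_mat n n" "P \<in> carrier_mat n n" "Q \<in> carrier_mat n n"
     "P * Q = 1\<^sub>m n" "Q * P = 1\<^sub>m n" "A = P * jordan_matrix n_as * Q"
    using A unfolding similar_mat_wit_def Let_def by auto
  have N: "sum_list (map fst n_as) = n" using c(2) jordan_matrix_carrier[of n_as] by (metis carrier_matD(1))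
  have ent: "\<forall>i<n. \<forall>j<n. jordan_matrix n_as $$ (i,j) \<noteq> 0 \<longrightarrow> j = Suc i"
    using jordan_entries[OF a0] N by blast
  show ?thesis using c ent by blast
qed

definition bid :: "nat \<Rightarrow> (nat \<Rightarrow> real) \<Rightarrow> (nat \<Rightarrow> real) \<Rightarrow> real mat" where
  "bid n s r = mat n n (\<lambda>(i,j). (if j = Suc i then s i else 0) + (if i = n - 1 then r j else 0))"

definition cm :: "nat \<Rightarrow> real \<Rightarrow> (nat \<Rightarrow> real) \<Rightarrow> (nat \<Rightarrow> real) \<Rightarrow> real mat" where
  "cm n x s r = mat n n (\<lambda>(i,j). (if i = j then x else 0) - ((if j = Suc i then s i else 0) + (if i = n - 1 then r j else 0)))"

lemma prod_list_map_upt0: "prod_list (map f [0..<m]) = (\<Prod>i<m. (f i :: real))"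
  by (induction m) (simp_all add: lessThan_Suc mult.commute)

lemma det_cm: "det (cm n x s r) = x^n - (\<Sum>j<n. r j * (\<Prod>k\<in>{j..<n-1}. s k) * x^j)"
proof (induction n arbitrary: s r rule: less_induct)
  case (less n)
  show ?case
  proof (cases "n \<le> 1")
    case True
    then consider "n = 0" | "n = 1" by linarith
    then show ?thesis
    proof cases
      case 1 then show ?thesis by (simp add: cm_def)
    next
      case 2
      have "det (cm n x s r) = cm n x s r $$ (0,0)" using 2 by (intro det_single) (simp add: cm_def)
      then show ?thesis using 2 by (simp add: cm_def)
    qed
  next
    case False
    define m where "m = n - 2"
    have n: "n = Suc (Suc m)" using False unfolding m_def by simp
    let ?B = "cm n x s r"
    have B: "?B \<in> carrier_mat n n" by (simp add: cm_def)
    have "det ?B = (\<Sum>i<n. ?B $$ (i,0) * cofactor ?B i 0)"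
      using laplace_expansion_column[OF B, of 0] n by simp
    also have "\<dots> = (\<Sum>i\<in>{0, n-1}. ?B $$ (i,0) * cofactor ?B i 0)"
    proof (rule sum.mono_neutral_right)
      show "\<forall>i\<in>{..<n} - {0, n-1}. ?B $$ (i,0) * cofactor ?B i 0 = 0"
        using n by (auto simp: cm_def)
    qed (use n in auto)
    also have "\<dots> = ?B $$ (0,0) * cofactor ?B 0 0 + ?B $$ (n-1,0) * cofactor ?B (n-1) 0"
      using n by simp
    also have "?B $$ (0,0) = x" using n by (simp add: cm_def)
    also have "?B $$ (n-1,0) = - r 0" using n by (simp add: cm_def)
    also have "cofactor ?B 0 0 = det (cm (n-1) x (\<lambda>k. s (Suc k)) (\<lambda>k. r (Suc k)))"
    proof -
      have "mat_delete ?B 0 0 = cm (n-1) x (\<lambda>k. s (Suc k)) (\<lambda>k. r (Suc k))"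
        unfolding mat_delete_def using n by (intro eq_matI) (auto simp: cm_def)
      then show ?thesis by (simp add: cofactor_def)
    qed
    also have "cofactor ?B (n-1) 0 = (-1)^(n-1) * (\<Prod>i<n-1. - s i)"
    proof -
      let ?L = "mat_delete ?B (n-1) 0"
      have L: "?L \<in> carrier_mat (n-1) (n-1)" by (simp add: mat_delete_def cm_def)
      have ent: "?L $$ (i,j) = (if i = Suc j then x else 0) - (if j = i then s i else 0)"
        if "i < n-1" "j < n-1" for i j
        unfolding mat_delete_def using that n by (auto simp: cm_def)
      have "det ?L = prod_list (diag_mat ?L)"
      proof (rule det_lower_triangular[OF _ L])
        fix i j assume ij: "i < j" "j < n - 1"
        then have "i < n - 1" by linarith
        then show "?L $$ (i,j) = 0" using ent[OF _ ij(2)] ij by simp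
      qed
      also have "\<dots> = (\<Prod>i<n-1. - s i)"
        unfolding diag_mat_def using ent by (simp add: prod_list_map_upt0 mat_delete_def cm_def)
      finally show ?thesis by (simp add: cofactor_def)
    qed
    finally have d: "det ?B = x * det (cm (n-1) x (\<lambda>k. s (Suc k)) (\<lambda>k. r (Suc k))) + - r 0 * ((-1)^(n-1) * (\<Prod>i<n-1. - s i))" .
    have IH: "det (cm (n-1) x (\<lambda>k. s (Suc k)) (\<lambda>k. r (Suc k))) =
       x^(n-1) - (\<Sum>j<n-1. r (Suc j) * (\<Prod>k\<in>{j..<n-1-1}. s (Suc k)) * x^j)"
      using less.IH[of "n-1"] n by simp
    have pm: "(-1)^(n-1) * (\<Prod>i<n-1. - s i) = (\<Prod>i<n-1. s i)"
    proof -
      have "(\<Prod>i<n-1. - s i) = (\<Prod>i<n-1. (-1::real) * s i)" by simp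
      also have "\<dots> = (\<Prod>i<n-1. (-1::real)) * (\<Prod>i<n-1. s i)" by (rule prod.distrib)
      also have "\<dots> = (-1)^(n-1) * (\<Prod>i<n-1. s i)" by simp
      finally show ?thesis by (simp flip: power_add mult.assoc)
    qed
    have sh: "(\<Prod>k\<in>{Suc j..<n-1}. s k) = (\<Prod>k\<in>{j..<n-1-1}. s (Suc k))" for j
    proof -
      have e: "{Suc j..<n-1} = {Suc j..<Suc (n-1-1)}" using n by simp
      have "(\<Prod>k\<in>{Suc j..<Suc (n-1-1)}. s k) = (\<Prod>k\<in>{j..<n-1-1}. s (Suc k))"
        by (simp only: prod.atLeast_Suc_lessThan_Suc_shift comp_def)
      then show ?thesis unfolding e .
    qed
    have "(\<Sum>j<n. r j * (\<Prod>k\<in>{j..<n-1}. s k) * x^j)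
        = r 0 * (\<Prod>k\<in>{0..<n-1}. s k) + (\<Sum>j<n-1. r (Suc j) * (\<Prod>k\<in>{Suc j..<n-1}. s k) * x^(Suc j))"
    proof -
      have e: "{..<n} = {..<Suc (n-1)}" using n by simp
      show ?thesis unfolding e by (simp only: sum.lessThan_Suc_shift power_0 mult_1_right)
    qed
    also have "\<dots> = r 0 * (\<Prod>k<n-1. s k) + x * (\<Sum>j<n-1. r (Suc j) * (\<Prod>k\<in>{j..<n-1-1}. s (Suc k)) * x^j)"
    proof -
      have "(\<Sum>j<n-1. r (Suc j) * (\<Prod>k\<in>{Suc j..<n-1}. s k) * x^(Suc j))
          = (\<Sum>j<n-1. x * (r (Suc j) * (\<Prod>k\<in>{j..<n-1-1}. s (Suc k)) * x^j))"
        by (rule sum.cong[OF refl]) (unfold sh, simp)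
      then show ?thesis by (simp add: sum_distrib_left atLeast0LessThan)
    qed
    finally have rs: "(\<Sum>j<n. r j * (\<Prod>k\<in>{j..<n-1}. s k) * x^j) = \<dots>" .
    have xn: "x^n = x * x^(n-1)" using n by simp
    show ?thesis unfolding d IH pm rs xn by (simp add: algebra_simps)
  qed
qed

lemma char_poly_bid: "char_poly (bid n s r) = monom 1 n - (\<Sum>j<n. monom (r j * (\<Prod>k\<in>{j..<n-1}. s k)) j)"
proof -
  have "poly (char_poly (bid n s r)) x = poly (monom 1 n - (\<Sum>j<n. monom (r j * (\<Prod>k\<in>{j..<n-1}. s k)) j)) x" for x
  proof -
    have B: "bid n s r \<in> carrier_mat n n" by (simp add: bid_def)
    have "poly (char_poly (bid n s r)) x = det (- char_matrix (bid n s r) x)"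
      by (rule char_poly_matrix[OF B])
    also have "- char_matrix (bid n s r) x = cm n x s r"
      by (intro eq_matI) (auto simp: char_matrix_def bid_def cm_def)
    finally show ?thesis by (simp add: det_cm poly_sum poly_monom mult.assoc)
  qed
  then show ?thesis by (simp add: poly_eq_poly_eq_iff[symmetric] fun_eq_iff)
qed

lemma target:
  fixes A :: "real mat"
  assumes A: "A \<in> carrier_mat n n" and nil: "nilpotent_mat A" and eta: "\<eta> > 0"
  shows "\<exists>\<delta>>0. \<forall>p. monic p \<and> degree p = n \<and> (\<forall>j<n. \<bar>coeff p j\<bar> \<le> \<delta>) \<longrightarrow>
     (\<exists>D \<in> carrier_mat n n. nrm D \<le> \<eta> \<and> char_poly (A + D) = p)"
proof -
  obtain J P Q where J: "J \<in> carrier_mat n n" and P: "P \<in> carrier_mat n n" and Q: "Q \<in> carrier_mat n n"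
    and PQ: "P * Q = 1\<^sub>m n" and QP: "Q * P = 1\<^sub>m n" and AJ: "A = P * J * Q"
    and Jent: "\<And>i j. i < n \<Longrightarrow> j < n \<Longrightarrow> J $$ (i,j) \<noteq> 0 \<Longrightarrow> j = Suc i"
    using nilp_jordan[OF A nil] by blast
  define cP where "cP = nrm P + 1"
  define cQ where "cQ = nrm Q + 1"
  have cP: "cP \<ge> 1" "nrm P \<le> cP" and cQ: "cQ \<ge> 1" "nrm Q \<le> cQ"
    using nrm_nonneg[of P] nrm_nonneg[of Q] by (auto simp: cP_def cQ_def)
  define \<epsilon> where "\<epsilon> = \<eta> / (2 * cP * cQ * (real n + 1))"
  have \<epsilon>0: "\<epsilon> > 0" using eta cP cQ by (simp add: \<epsilon>_def)
  define s where "s i = (if J $$ (i, Suc i) = 0 then \<epsilon> else J $$ (i, Suc i))" for i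
  have s0: "s i \<noteq> 0" for i using \<epsilon>0 by (simp add: s_def)
  define \<sigma> where "\<sigma> j = (\<Prod>k\<in>{j..<n-1}. s k)" for j
  have \<sigma>0: "\<sigma> j \<noteq> 0" for j unfolding \<sigma>_def using s0 by (simp add: prod_zero_iff)
  define \<kappa> where "\<kappa> = (\<Sum>j<n. 1 / \<bar>\<sigma> j\<bar>)"
  have \<kappa>0: "\<kappa> \<ge> 0" unfolding \<kappa>_def by (intro sum_nonneg) auto
  define \<delta> where "\<delta> = \<eta> / (2 * cP * cQ * (\<kappa> + 1))"
  have \<delta>0: "\<delta> > 0" using eta cP cQ \<kappa>0 by (simp add: \<delta>_def)
  show ?thesis
  proof (intro exI[of _ \<delta>] conjI allI impI \<delta>0)
    fix p :: "real poly" assume "monic p \<and> degree p = n \<and> (\<forall>j<n. \<bar>coeff p j\<bar> \<le> \<delta>)"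
    then have mon: "lead_coeff p = 1" and deg: "degree p = n" and small: "\<And>j. j < n \<Longrightarrow> \<bar>coeff p j\<bar> \<le> \<delta>" by auto
    define r where "r j = - coeff p j / \<sigma> j" for j
    define M where "M = bid n s r"
    have M: "M \<in> carrier_mat n n" by (simp add: M_def bid_def)
    have cpM: "char_poly M = p"
    proof (rule poly_eqI)
      fix i
      have "coeff (char_poly M) i = (if n = i then 1 else 0) - (\<Sum>j<n. if j = i then r j * \<sigma> j else 0)"
        unfolding M_def char_poly_bid \<sigma>_def by (simp add: coeff_sum coeff_monom)
      also have "(\<Sum>j<n. if j = i then r j * \<sigma> j else 0) = (if i < n then r i * \<sigma> i else 0)"
        by (simp add: sum.delta'[of "{..<n}" i "\<lambda>j. r j * \<sigma> j", simplified] split: if_splits)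
      finally have e: "coeff (char_poly M) i = (if n = i then 1 else 0) - (if i < n then r i * \<sigma> i else 0)" .
      show "coeff (char_poly M) i = coeff p i"
      proof (cases "i < n")
        case True
        then show ?thesis using e \<sigma>0[of i] by (simp add: r_def)
      next
        case False
        show ?thesis
        proof (cases "i = n")
          case True then show ?thesis using e mon deg by simp
        next
          case False
          then have "i > degree p" using \<open>\<not> i < n\<close> deg by simp
          then show ?thesis using e \<open>\<not> i < n\<close> False by (simp add: coeff_eq_0)
        qed
      qed
    qed
    define D0 where "D0 = M - J"
    define D where "D = P * D0 * Q"
    have D0: "D0 \<in> carrier_mat n n" using M J by (simp add: D0_def minus_carrier_mat)
    have Dc: "D \<in> carrier_mat n n" using P D0 Q by (simp add: D_def)
    have AD: "A + D = P * M * Q"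
    proof -
      have "J + D0 = M" using M J by (intro eq_matI) (auto simp: D0_def)
      have "P * M * Q = P * (J + D0) * Q" using \<open>J + D0 = M\<close> by simp
      also have "P * (J + D0) = P * J + P * D0" by (rule mult_add_distrib_mat[OF P J D0])
      also have "(P * J + P * D0) * Q = P * J * Q + P * D0 * Q"
        by (rule add_mult_distrib_mat) (use P J D0 Q in auto)
      finally show ?thesis unfolding AJ D_def by simp
    qed
    have "similar_mat_wit (A + D) M P Q"
      unfolding similar_mat_wit_def Let_def using AD A Dc M P Q PQ QP by (auto simp del: assoc_mult_mat)
    then have "char_poly (A + D) = char_poly M" by (intro char_poly_similar) (auto simp: similar_mat_def)
    then have cp: "char_poly (A + D) = p" using cpM by simp
    have ent: "\<bar>D0 $$ (i,j)\<bar> \<le> (if j = Suc i then \<epsilon> else 0) + (if i = n - 1 then \<bar>r j\<bar> else 0)"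
      if ij: "i < n" "j < n" for i j
    proof -
      have d: "D0 $$ (i,j) = ((if j = Suc i then s i else 0) + (if i = n - 1 then r j else 0)) - J $$ (i,j)"
        using ij M J by (simp add: D0_def M_def bid_def)
      show ?thesis
      proof (cases "j = Suc i")
        case True
        have "\<bar>s i - J $$ (i,j)\<bar> \<le> \<epsilon>" using True \<epsilon>0 by (simp add: s_def)
        then show ?thesis unfolding d using True abs_ge_self[of "r j"] abs_ge_minus_self[of "r j"] by (auto simp: abs_le_iff)
      next
        case False
        then have "J $$ (i,j) = 0" using Jent ij by blast
        then show ?thesis unfolding d using False by auto
      qed
    qed
    have "nrm D0 \<le> (\<Sum>i<n. \<Sum>j<n. (if j = Suc i then \<epsilon> else 0) + (if i = n - 1 then \<bar>r j\<bar> else 0))"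
    proof -
      have dims: "dim_row D0 = n" "dim_col D0 = n" using D0 by auto
      show ?thesis unfolding nrm_def dims by (intro sum_mono ent) auto
    qed
    also have "\<dots> = (\<Sum>i<n. (\<Sum>j<n. if j = Suc i then \<epsilon> else 0)) + (\<Sum>i<n. \<Sum>j<n. if i = n - 1 then \<bar>r j\<bar> else 0)"
      by (simp only: sum.distrib)
    also have "(\<Sum>i<n. \<Sum>j<n. if i = n - 1 then \<bar>r j\<bar> else 0) = (\<Sum>i<n. if i = n - 1 then (\<Sum>j<n. \<bar>r j\<bar>) else 0)"
      by (intro sum.cong refl) simp
    also have "(\<Sum>i<n. (\<Sum>j<n. if j = Suc i then \<epsilon> else 0)) \<le> (\<Sum>i<n. \<epsilon>)"
      by (intro sum_mono) (simp add: sum.delta' \<epsilon>0 less_imp_le)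
    also have "(\<Sum>i<n. if i = n - 1 then (\<Sum>j<n. \<bar>r j\<bar>) else 0) \<le> (\<Sum>j<n. \<bar>r j\<bar>)"
      by (cases "n = 0") (simp_all add: sum.delta' sum_nonneg)
    also have "(\<Sum>j<n. \<bar>r j\<bar>) \<le> (\<Sum>j<n. \<delta> * (1 / \<bar>\<sigma> j\<bar>))"
    proof (intro sum_mono)
      fix j assume "j \<in> {..<n}"
      then have "\<bar>coeff p j\<bar> \<le> \<delta>" using small by simp
      then show "\<bar>r j\<bar> \<le> \<delta> * (1 / \<bar>\<sigma> j\<bar>)" using \<sigma>0[of j]
        by (simp add: r_def divide_right_mono)
    qed
    also have "(\<Sum>j<n. \<delta> * (1 / \<bar>\<sigma> j\<bar>)) = \<delta> * \<kappa>" by (simp add: \<kappa>_def sum_distrib_left)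
    finally have nD0: "nrm D0 \<le> real n * \<epsilon> + \<delta> * \<kappa>" by simp
    have "nrm D \<le> nrm (P * D0) * nrm Q" unfolding D_def by (rule nrm_mult) (use P D0 Q in auto)
    also have "\<dots> \<le> (nrm P * nrm D0) * nrm Q"
      by (intro mult_right_mono nrm_mult[OF P D0] nrm_nonneg)
    also have "\<dots> \<le> (cP * (real n * \<epsilon> + \<delta> * \<kappa>)) * cQ"
      using cP cQ nD0 \<epsilon>0 \<delta>0 \<kappa>0 by (intro mult_mono) (auto simp: nrm_nonneg)
    also have "\<dots> = cP * cQ * real n * \<epsilon> + cP * cQ * \<delta> * \<kappa>" by (simp add: algebra_simps)
    also have "cP * cQ * real n * \<epsilon> \<le> \<eta> / 2"
    proof -
      have pos: "cP * cQ * (real n + 1) > 0" using cP cQ by simp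
      have "cP * cQ * real n * \<epsilon> = \<eta> / 2 * (real n / (real n + 1)) * ((cP * cQ * (real n + 1)) / (cP * cQ * (real n + 1)))"
        by (simp add: \<epsilon>_def)
      also have "\<dots> = \<eta> / 2 * (real n / (real n + 1))" using pos cP cQ by simp
      finally have "cP * cQ * real n * \<epsilon> = \<eta> / 2 * (real n / (real n + 1))" .
      also have "\<dots> \<le> \<eta> / 2 * 1" using eta by (intro mult_left_mono) auto
      finally show ?thesis by simp
    qed
    also have "cP * cQ * \<delta> * \<kappa> \<le> \<eta> / 2"
    proof -
      have pos: "cP * cQ * (\<kappa> + 1) > 0" using cP cQ \<kappa>0 by simp
      have "cP * cQ * \<delta> * \<kappa> = \<eta> / 2 * (\<kappa> / (\<kappa> + 1)) * ((cP * cQ * (\<kappa> + 1)) / (cP * cQ * (\<kappa> + 1)))"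
        by (simp add: \<delta>_def)
      also have "\<dots> = \<eta> / 2 * (\<kappa> / (\<kappa> + 1))" using pos cP cQ by simp
      finally have "cP * cQ * \<delta> * \<kappa> = \<eta> / 2 * (\<kappa> / (\<kappa> + 1))" .
      also have "\<dots> \<le> \<eta> / 2 * 1" using eta \<kappa>0 by (intro mult_left_mono) auto
      finally show ?thesis by simp
    qed
    finally have "nrm D \<le> \<eta>" by simp
    then show "\<exists>D \<in> carrier_mat n n. nrm D \<le> \<eta> \<and> char_poly (A + D) = p" using Dc cp by blast
  qed
qed

lemma char_poly_smult_eval: fixes B :: "real mat"
  assumes B: "B \<in> carrier_mat n n" and t: "t \<noteq> 0"
  shows "poly (char_poly (t \<cdot>\<^sub>m B)) x = t^n * poly (char_poly B) (x / t)"
proof -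
  have tB: "t \<cdot>\<^sub>m B \<in> carrier_mat n n" using B by simp
  have "poly (char_poly (t \<cdot>\<^sub>m B)) x = det (- char_matrix (t \<cdot>\<^sub>m B) x)" by (rule char_poly_matrix[OF tB])
  also have "- char_matrix (t \<cdot>\<^sub>m B) x = t \<cdot>\<^sub>m (- char_matrix B (x / t))"
    using B t by (intro eq_matI) (auto simp: char_matrix_def algebra_simps)
  also have "det \<dots> = t ^ n * det (- char_matrix B (x / t))" using B by (simp add: char_matrix_def)
  also have "det (- char_matrix B (x / t)) = poly (char_poly B) (x / t)" by (rule char_poly_matrix[OF B, symmetric])
  finally show ?thesis .
qed

lemma sign_of_mult_pos: "t > 0 \<Longrightarrow> sign_of (t * x) = sign_of x"
  by (auto simp: sign_of_def zero_less_mult_iff mult_less_0_iff)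

lemma qual_smult: "in_qual_class M P \<Longrightarrow> t > 0 \<Longrightarrow> in_qual_class (t \<cdot>\<^sub>m M) P"
  unfolding in_qual_class_def by (auto simp: sign_of_mult_pos)

lemma sap_of_small:
  assumes sq: "dim_row P' = n" "dim_col P' = n" and \<delta>: "\<delta> > 0"
  and H: "\<And>p. monic p \<Longrightarrow> degree p = n \<Longrightarrow> (\<forall>j<n. \<bar>coeff p j\<bar> \<le> \<delta>) \<Longrightarrow> \<exists>M. in_qual_class M P' \<and> char_poly M = p"
  shows "spectrally_arbitrary P'"
  unfolding spectrally_arbitrary_def
proof (intro conjI allI impI)
  show "dim_row P' = dim_col P'" using sq by simp
  fix p :: "real poly" assume "monic p \<and> degree p = dim_row P'"
  then have mon: "lead_coeff p = 1" and deg: "degree p = n" using sq by auto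
  define C where "C = (\<Sum>j<n. \<bar>coeff p j\<bar>)"
  have C0: "C \<ge> 0" unfolding C_def by (intro sum_nonneg) auto
  define t where "t = 1 + C / \<delta>"
  have t1: "t \<ge> 1" using C0 \<delta> by (simp add: t_def)
  have t0: "t > 0" using t1 by simp
  define q where "q = (\<Sum>j\<le>n. monom (coeff p j / t^(n-j)) j)"
  have cq: "coeff q i = (if i \<le> n then coeff p i / t^(n-i) else 0)" for i
    unfolding q_def by (simp add: coeff_sum coeff_monom)
  have cqn: "coeff q n = 1" using cq mon deg by simp
  have degq: "degree q = n"
  proof (rule antisym)
    show "degree q \<le> n" by (rule degree_le) (simp add: cq)
    show "n \<le> degree q" using cqn by (intro le_degree) simp
  qed
  have monq: "monic q" using degq cqn by simp
  have smallq: "\<forall>j<n. \<bar>coeff q j\<bar> \<le> \<delta>"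
  proof (intro allI impI)
    fix j assume j: "j < n"
    have cj: "\<bar>coeff p j\<bar> \<le> C" unfolding C_def using j by (intro member_le_sum) auto
    have "t \<le> t ^ (n - j)" using t1 j by (intro power_increasing[of 1 "n-j" t, simplified]) auto
    then have tp: "t ^ (n-j) \<ge> C / \<delta>" using t_def by simp
    have tpos: "t ^ (n-j) > 0" using t0 by simp
    have "\<bar>coeff q j\<bar> = \<bar>coeff p j\<bar> / t^(n-j)" using cq j t0 by (simp add: abs_div)
    also have "\<dots> \<le> \<delta>"
    proof -
      have "C \<le> \<delta> * t^(n-j)" using tp \<delta> by (simp add: pos_divide_le_eq mult.commute)
      then have "\<bar>coeff p j\<bar> \<le> \<delta> * t^(n-j)" using cj by linarith
      then show ?thesis using tpos by (simp add: divide_le_eq)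
    qed
    finally show "\<bar>coeff q j\<bar> \<le> \<delta>" .
  qed
  obtain M where M: "in_qual_class M P'" "char_poly M = q" using H[OF monq degq smallq] by blast
  have Mc: "M \<in> carrier_mat n n" using M(1) sq unfolding in_qual_class_def by auto
  have "poly (char_poly (t \<cdot>\<^sub>m M)) x = poly p x" for x
  proof -
    have "poly (char_poly (t \<cdot>\<^sub>m M)) x = t^n * poly q (x / t)" using char_poly_smult_eval[OF Mc] t0 M(2) by simp
    also have "poly q (x / t) = (\<Sum>j\<le>n. coeff p j / t^(n-j) * (x / t)^j)"
      unfolding q_def by (simp add: poly_sum poly_monom)
    also have "t^n * \<dots> = (\<Sum>j\<le>n. coeff p j * x^j)"
      unfolding sum_distrib_left
    proof (rule sum.cong[OF refl])
      fix j assume "j \<in> {..n}"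
      then have "t^n = t^(n-j) * t^j" by (simp add: power_add[symmetric])
      then show "t^n * (coeff p j / t^(n-j) * (x / t)^j) = coeff p j * x^j"
        using t0 by (simp add: power_divide field_simps)
    qed
    also have "\<dots> = poly p x" by (simp add: poly_altdef deg)
    finally show ?thesis .
  qed
  then have "char_poly (t \<cdot>\<^sub>m M) = p" by (simp add: poly_eq_poly_eq_iff[symmetric] fun_eq_iff)
  then show "\<exists>A. in_qual_class A P' \<and> char_poly A = p" using qual_smult[OF M(1) t0] by blast
qed

theorem corollary5p6:
  fixes n :: nat and P :: "sign mat" and A :: "real mat"
  assumes "P \<in> carrier_mat n n"
    and "in_qual_class A P"
    and "nilpotent_mat A"
    and "nSSP A"
  shows "\<forall>P'. superpattern P' P \<longrightarrow> spectrally_arbitrary P'"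
proof (intro allI impI)
  fix P' assume sup: "superpattern P' P"
  have Pc: "P \<in> carrier_mat n n" using assms(1) .
  have A: "A \<in> carrier_mat n n" using assms(2) Pc unfolding in_qual_class_def by auto
  have Asgn: "\<And>i j. i < n \<Longrightarrow> j < n \<Longrightarrow> sign_of (A $$ (i,j)) = P $$ (i,j)"
    using assms(2) Pc unfolding in_qual_class_def by auto
  have P'd: "dim_row P' = n" "dim_col P' = n" using sup Pc unfolding superpattern_def by auto
  have P'e: "\<And>i j. i < n \<Longrightarrow> j < n \<Longrightarrow> P $$ (i,j) \<noteq> SZero \<Longrightarrow> P' $$ (i,j) = P $$ (i,j)"
    using sup Pc unfolding superpattern_def by auto
  define S where "S = {\<bar>A $$ (i,j)\<bar> | i j. i < n \<and> j < n \<and> A $$ (i,j) \<noteq> 0} \<union> {1}"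
  have Sfin: "finite S"
  proof -
    have "{\<bar>A $$ (i,j)\<bar> | i j. i < n \<and> j < n \<and> A $$ (i,j) \<noteq> 0} \<subseteq> (\<lambda>(i,j). \<bar>A $$ (i,j)\<bar>) ` ({..<n} \<times> {..<n})"
      by auto
    moreover have "finite ((\<lambda>(i,j). \<bar>A $$ (i,j)\<bar>) ` ({..<n} \<times> {..<n}))" by simp
    ultimately have "finite {\<bar>A $$ (i,j)\<bar> | i j. i < n \<and> j < n \<and> A $$ (i,j) \<noteq> 0}" by (rule finite_subset)
    then show ?thesis unfolding S_def by simp
  qed
  define minA where "minA = Min S"
  have minA0: "minA > 0"
  proof -
    have "\<forall>x\<in>S. x > 0" unfolding S_def by auto
    then show ?thesis unfolding minA_def using Sfin by (simp add: S_def)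
  qed
  have minA_le: "minA \<le> \<bar>A $$ (i,j)\<bar>" if "i < n" "j < n" "A $$ (i,j) \<noteq> 0" for i j
    unfolding minA_def using Sfin that by (intro Min_le) (auto simp: S_def)
  define \<mu> where "\<mu> = minA / 2"
  have \<mu>0: "\<mu> > 0" using minA0 by (simp add: \<mu>_def)
  obtain \<delta>1 where \<delta>1: "\<delta>1 > 0" and LS: "\<And>D Z. D \<in> carrier_mat n n \<Longrightarrow> Z \<in> carrier_mat n n \<Longrightarrow> nrm D \<le> \<delta>1 \<Longrightarrow> nrm Z \<le> \<delta>1 \<Longrightarrow>
     (\<exists>X \<in> carrier_mat n n. nrm X \<le> \<mu> \<and> char_poly (A + msk A X + Z) = char_poly (A + D))"
    using local_sim[OF A assms(4) \<mu>0] by blast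
  obtain \<delta>2 where \<delta>2: "\<delta>2 > 0" and TG: "\<And>p. monic p \<and> degree p = n \<and> (\<forall>j<n. \<bar>coeff p j\<bar> \<le> \<delta>2) \<Longrightarrow>
     (\<exists>D \<in> carrier_mat n n. nrm D \<le> \<delta>1 \<and> char_poly (A + D) = p)"
    using target[OF A assms(3) \<delta>1] by blast
  define sv where "sv s = (case s of SPos \<Rightarrow> 1 | SNeg \<Rightarrow> -1 | SZero \<Rightarrow> (0::real))" for s
  have svb: "\<bar>sv s\<bar> \<le> 1" for s by (cases s) (auto simp: sv_def)
  have svs: "t > 0 \<Longrightarrow> sign_of (t * sv s) = s" for t s by (cases s) (auto simp: sv_def sign_of_def mult_less_0_iff)
  define \<zeta> where "\<zeta> = \<delta>1 / (real (n * n) + 1)"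
  have pos1: "real (n * n) + 1 > 0" using of_nat_0_le_iff[of "n*n"] by linarith
  then have \<zeta>0: "\<zeta> > 0" unfolding \<zeta>_def using \<delta>1 by (intro divide_pos_pos)
  define Z where "Z = mat n n (\<lambda>(i,j). if A $$ (i,j) = 0 then \<zeta> * sv (P' $$ (i,j)) else 0)"
  have Zc: "Z \<in> carrier_mat n n" by (simp add: Z_def)
  have nZ: "nrm Z \<le> \<delta>1"
  proof -
    have "nrm Z = (\<Sum>i<n. \<Sum>j<n. \<bar>if A $$ (i,j) = 0 then \<zeta> * sv (P' $$ (i,j)) else 0\<bar>)"
      by (simp add: nrm_def Z_def)
    also have "\<dots> \<le> (\<Sum>i<n. \<Sum>j<n. \<zeta>)"
    proof (intro sum_mono)
      fix i j
      have "\<zeta> * \<bar>sv (P' $$ (i,j))\<bar> \<le> \<zeta> * 1" using \<zeta>0 svb by (intro mult_left_mono) auto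
      then show "\<bar>if A $$ (i,j) = 0 then \<zeta> * sv (P' $$ (i,j)) else 0\<bar> \<le> \<zeta>"
        using \<zeta>0 by (auto simp: abs_mult)
    qed
    also have "\<dots> = real (n * n) * \<zeta>" by simp
    also have "\<dots> \<le> \<delta>1"
    proof -
      have "real (n * n) * \<zeta> = \<delta>1 * (real (n * n) / (real (n * n) + 1))" by (simp add: \<zeta>_def)
      also have "\<dots> \<le> \<delta>1 * 1"
      proof (intro mult_left_mono)
        show "real (n * n) / (real (n * n) + 1) \<le> 1" using pos1 by (subst divide_le_eq_1_pos) auto
      qed (use \<delta>1 in auto)
      finally show ?thesis by simp
    qed
    finally show ?thesis .
  qed
  show "spectrally_arbitrary P'"
  proof (rule sap_of_small[OF P'd \<delta>2])
    fix p :: "real poly" assume p: "monic p" "degree p = n" "\<forall>j<n. \<bar>coeff p j\<bar> \<le> \<delta>2"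
    obtain D where D: "D \<in> carrier_mat n n" "nrm D \<le> \<delta>1" "char_poly (A + D) = p" using TG p by blast
    obtain X where X: "X \<in> carrier_mat n n" "nrm X \<le> \<mu>" "char_poly (A + msk A X + Z) = char_poly (A + D)"
      using LS[OF D(1) Zc D(2) nZ] by blast
    let ?M = "A + msk A X + Z"
    have "in_qual_class ?M P'"
      unfolding in_qual_class_def
    proof (intro conjI allI impI)
      show "dim_row ?M = dim_row P'" "dim_col ?M = dim_col P'" using P'd Zc by auto
      fix i j assume "i < dim_row P'" "j < dim_col P'"
      then have ij: "i < n" "j < n" using P'd by auto
      have Mij: "?M $$ (i,j) = A $$ (i,j) + (if A $$ (i,j) = 0 then 0 else X $$ (i,j)) + Z $$ (i,j)"
        using ij A Zc by (simp add: msk_def)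
      show "sign_of (?M $$ (i,j)) = P' $$ (i,j)"
      proof (cases "A $$ (i,j) = 0")
        case True
        then show ?thesis using Mij ij svs[OF \<zeta>0] by (simp add: Z_def)
      next
        case False
        have "\<bar>X $$ (i,j)\<bar> \<le> nrm X" using X(1) ij by (intro entry_le_nrm) auto
        then have xl: "\<bar>X $$ (i,j)\<bar> < \<bar>A $$ (i,j)\<bar>" using X(2) minA_le[OF ij False] minA0 by (simp add: \<mu>_def)
        have "?M $$ (i,j) = A $$ (i,j) + X $$ (i,j)" using Mij False ij by (simp add: Z_def)
        then have "sign_of (?M $$ (i,j)) = sign_of (A $$ (i,j))" using xl
          by (auto simp: sign_of_def abs_if split: if_splits)
        also have "\<dots> = P $$ (i,j)" using Asgn ij by simp
        also have "\<dots> = P' $$ (i,j)" using P'e[OF ij] Asgn[OF ij] False by (simp add: sign_of_def split: if_splits)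
        finally show ?thesis .
      qed
    qed
    then show "\<exists>M. in_qual_class M P' \<and> char_poly M = p" using X(3) D(3) by auto
  qed
qed

end
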